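(* Define elements of $\mathcal H$ by $z_n=2u_n+\sum_{k=1}^{n-1}u_ku_{n-k}$ and, recursively, $w_n=\frac12u_n-\frac12\sum_{i=1}^{n-1}w_iw_{n-i}$ ($n\ge1$). Let $\Phi:(\mathcal H,\Delta_{Fr})\to(\mathcal H,\Delta)$ be the unique algebra morphism with $\Phi(u_n)=z_n$ for all $n\ge1$. Then $\Phi$ is an isomorphism of graded Hopf algebras, and its inverse is given by $\Phi^{-1}(u_n)=w_n$.
   Context: Planar rooted trees are finite trees with a root, embedded in the plane, edges oriented away from the root (undecorated). Let $\mathcal H_{P,R}$ be the free associative unital $\mathbb Q$-algebra on planar rooted trees, with basis the planar forests $t_1\cdots t_n$ ($1$ = empty forest), graded by weight (number of vertices), with coproduct $\Delta(F)=\sum_cP^c(F)\otimes R^c(F)$ over tuples $c=(c_i)$ where each $c_i$ is the empty cut of $t_i$ ($P=1,R=t_i$), the total cut ($P=t_i,R=1$), or an admissible cut of $t_i$ (a nonempty set of edges such that every oriented path meets at most one of them; $R^{c_i}(t_i)$ is the component of the root and $P^{c_i}(t_i)$ the left-to-right planar forest of the other components), $P^c(F)=\prod P^{c_i}(t_i)$, $R^c(F)=\prod R^{c_i}(t_i)$, and counit $\varepsilon(F)=0$ for $F\ne1$. On the same algebra there is a second Hopf algebra structure (the Frabetti–Brouder one) with coproduct $\Delta_{Fr}(F)=\sum_cP^c(F)\otimes R^c(F)$ where each $c_i$ is the empty cut, the total cut, or an admissible cut of $t_i$ containing no left edge (an edge is left if it is the leftmost among the edges with the same origin). For $n\ge1$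 let $u_n$ be the sum of all planar forests of weight $n$, and let $\mathcal H$ be the subalgebra generated by the $u_n$; the $u_n$ generate $\mathcal H$ freely, and $\mathcal H$ is a graded Hopf subalgebra for both $\Delta$ and $\Delta_{Fr}$. *)

theory Defs
  imports Complex_Main
begin

text \<open>A planar rooted tree is a root together with the (ordered, left to right) list of
  its subtrees; a planar forest is a list of planar rooted trees (the empty list is the
  empty forest 1).\<close>

datatype ptree = Node "ptree list"

type_synonym forest = "ptree list"

fun tw :: "ptree \<Rightarrow> nat" where
  "tw (Node ts) = Suc (sum_list (map tw ts))"

definition fw :: "forest \<Rightarrow> nat" where
  "fw F = sum_list (map tw F)"

text \<open>cuts t lists, with multiplicity, the pairs (P^c(t), R^c(t)) for all cuts c of t:
  the total cut, and all other cuts (the empty one and the admissible ones).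
  A non-total cut of Node [t1,...,tk] is given by choosing, for each child ti, either to
  cut the edge to ti (contributing the whole ti to P), or not to cut that edge and to
  choose a non-total cut of ti.\<close>

fun cuts :: "ptree \<Rightarrow> (forest \<times> forest) list" where
  "cuts (Node ts) =
     ([Node ts], []) #
     map (\<lambda>ps. (concat (map fst ps), [Node (concat (map snd ps))]))
         (product_lists (map cuts ts))"

text \<open>Frabetti--Brouder cuts: the edge to the leftmost child of a vertex (a left edge)
  may not be cut. fcuts b t: if b then the total cut of t is included.\<close>

fun fcuts :: "bool \<Rightarrow> ptree \<Rightarrow> (forest \<times> forest) list" where
  "fcuts b (Node []) = (if b then [([Node []], [])] else []) @ [([], [Node []])]"
| "fcuts b (Node (t1 # ts)) =
     (if b then [([Node (t1 # ts)], [])] else []) @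
     map (\<lambda>ps. (concat (map fst ps), [Node (concat (map snd ps))]))
         (product_lists (fcuts False t1 # map (fcuts True) ts))"

definition cutsF :: "forest \<Rightarrow> (forest \<times> forest) list" where
  "cutsF F = map (\<lambda>cs. (concat (map fst cs), concat (map snd cs))) (product_lists (map cuts F))"

definition fcutsF :: "forest \<Rightarrow> (forest \<times> forest) list" where
  "fcutsF F = map (\<lambda>cs. (concat (map fst cs), concat (map snd cs)))
                (product_lists (map (fcuts True) F))"

text \<open>Elements of H_{P,R} are (finitely supported) functions from planar forests to Q
  (coefficients in the forest basis); elements of H_{P,R} (x) H_{P,R} are functions on
  pairs of forests.\<close>

type_synonym alg = "forest \<Rightarrow> rat"
type_synonym alg2 = "forest \<times> forest \<Rightarrow> rat"

definition fsupp :: "alg \<Rightarrow> bool" where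
  "fsupp a \<longleftrightarrow> finite {F. a F \<noteq> 0}"

definition fadd :: "alg \<Rightarrow> alg \<Rightarrow> alg" where
  "fadd a b = (\<lambda>F. a F + b F)"

definition smul :: "rat \<Rightarrow> alg \<Rightarrow> alg" where
  "smul c a = (\<lambda>F. c * a F)"

definition fsum :: "(nat \<Rightarrow> alg) \<Rightarrow> nat set \<Rightarrow> alg" where
  "fsum f K = (\<lambda>F. \<Sum>k\<in>K. f k F)"

definition fmul :: "alg \<Rightarrow> alg \<Rightarrow> alg" where
  "fmul a b = (\<lambda>F. \<Sum>i\<le>length F. a (take i F) * b (drop i F))"

definition fone :: alg where
  "fone = (\<lambda>F. if F = [] then 1 else 0)"

definition counit :: "alg \<Rightarrow> rat" where
  "counit a = a []"

definition cop :: "alg \<Rightarrow> alg2" where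
  "cop a = (\<lambda>p. \<Sum>F\<in>{F. a F \<noteq> 0}. a F * of_nat (count_list (cutsF F) p))"

definition copFr :: "alg \<Rightarrow> alg2" where
  "copFr a = (\<lambda>p. \<Sum>F\<in>{F. a F \<noteq> 0}. a F * of_nat (count_list (fcutsF F) p))"

definition tens_sum :: "(alg \<times> alg) list \<Rightarrow> alg2" where
  "tens_sum ps = (\<lambda>(G, H). sum_list (map (\<lambda>(a, b). a G * b H) ps))"

definition u :: "nat \<Rightarrow> alg" where
  "u n = (\<lambda>F. if fw F = n then 1 else 0)"

inductive_set Hs :: "alg set" where
  gen: "n \<ge> 1 \<Longrightarrow> u n \<in> Hs"
| one: "fone \<in> Hs"
| add: "a \<in> Hs \<Longrightarrow> b \<in> Hs \<Longrightarrow> fadd a b \<in> Hs"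
| smul: "a \<in> Hs \<Longrightarrow> smul c a \<in> Hs"
| mul: "a \<in> Hs \<Longrightarrow> b \<in> Hs \<Longrightarrow> fmul a b \<in> Hs"

definition homogeneous :: "nat \<Rightarrow> alg \<Rightarrow> bool" where
  "homogeneous n a \<longleftrightarrow> (\<forall>F. a F \<noteq> 0 \<longrightarrow> fw F = n)"

definition alg_morph_H :: "(alg \<Rightarrow> alg) \<Rightarrow> bool" where
  "alg_morph_H \<Phi> \<longleftrightarrow>
     (\<forall>x\<in>Hs. \<Phi> x \<in> Hs) \<and>
     (\<forall>x\<in>Hs. \<forall>y\<in>Hs. \<Phi> (fadd x y) = fadd (\<Phi> x) (\<Phi> y)) \<and>
     (\<forall>x\<in>Hs. \<forall>c. \<Phi> (smul c x) = smul c (\<Phi> x)) \<and>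
     (\<forall>x\<in>Hs. \<forall>y\<in>Hs. \<Phi> (fmul x y) = fmul (\<Phi> x) (\<Phi> y)) \<and>
     \<Phi> fone = fone"

definition z :: "nat \<Rightarrow> alg" where
  "z n = fadd (smul 2 (u n)) (fsum (\<lambda>k. fmul (u k) (u (n - k))) {1..n-1})"

function w :: "nat \<Rightarrow> alg" where
  "w n = (\<lambda>F. (1/2) * u n F - (1/2) * (\<Sum>i\<in>{1..<n}. fmul (w i) (w (n - i)) F))"
  by auto
termination
  by (relation "measure id") auto

end

theory Submission
  imports Defs
begin


lemma fw_Nil[simp]: "fw [] = 0" by (simp add: fw_def)
lemma fw_Cons[simp]: "fw (t # F) = tw t + fw F" by (simp add: fw_def)
lemma fw_append[simp]: "fw (F @ G) = fw F + fw G" by (simp add: fw_def)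
lemma tw_pos: "tw t > 0" by (cases t) auto
lemma tw_ne0[simp]: "tw t \<noteq> 0" using tw_pos[of t] by simp
lemma tw_Node[simp]: "tw (Node ts) = Suc (fw ts)" by (simp add: fw_def)
declare tw.simps[simp del]
lemma fw_0_iff[simp]: "fw F = 0 \<longleftrightarrow> F = []"
  by (cases F) auto

definition W :: "nat \<Rightarrow> forest set" where "W n = {F. fw F = n}"

lemma finite_fw_le: "finite {F. fw F \<le> n}"
proof (induction n)
  case 0 then show ?case by simp
next
  case (Suc n)
  let ?A = "{F. fw F \<le> n}"
  have "{F. fw F \<le> Suc n} \<subseteq> insert [] ((\<lambda>(ts, F). Node ts # F) ` (?A \<times> ?A))"
  proof
    fix F assume "F \<in> {F. fw F \<le> Suc n}"
    then show "F \<in> insert [] ((\<lambda>(ts, F). Node ts # F) ` (?A \<times> ?A))"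
    proof (cases F)
      case (Cons t F')
      obtain ts where "t = Node ts" by (cases t)
      with Cons \<open>F \<in> _\<close> show ?thesis
        by (auto simp: tw_Node intro!: image_eqI[where x="(ts, F')"])
    qed simp
  qed
  then show ?case using Suc by (meson finite_SigmaI finite_imageI finite_insert finite_subset)
qed

lemma finite_W[simp]: "finite (W n)"
  by (rule finite_subset[OF _ finite_fw_le[of n]]) (auto simp: W_def)

definition PW :: "nat \<Rightarrow> (forest \<times> forest) set" where
  "PW n = {(F1, F2). fw F1 + fw F2 = n}"

lemma finite_PW[simp]: "finite (PW n)"
  by (rule finite_subset[of _ "{F. fw F \<le> n} \<times> {F. fw F \<le> n}"])
     (auto simp: PW_def finite_fw_le)

lemma L1:
  "(\<Sum>F\<in>W n. \<Sum>i\<le>length F. h (take i F) (drop i F)) = (\<Sum>(F1, F2)\<in>PW n. h F1 F2)"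
proof -
  have "(\<Sum>F\<in>W n. \<Sum>i\<le>length F. h (take i F) (drop i F))
      = (\<Sum>(F, i)\<in>Sigma (W n) (\<lambda>F. {..length F}). h (take i F) (drop i F))"
    by (rule sum.Sigma) auto
  also have "\<dots> = (\<Sum>(F1, F2)\<in>PW n. h F1 F2)"
  proof (rule sum.reindex_bij_witness[where i="\<lambda>(F1, F2). (F1 @ F2, length F1)"
        and j="\<lambda>(F, i). (take i F, drop i F)"])
    fix a assume "a \<in> Sigma (W n) (\<lambda>F. {..length F})"
    then show "(case (case a of (F, i) \<Rightarrow> (take i F, drop i F)) of (F1, F2) \<Rightarrow> (F1 @ F2, length F1)) = a"
      by (cases a) auto
  next
    fix a assume "a \<in> Sigma (W n) (\<lambda>F. {..length F})"
    then show "(case a of (F, i) \<Rightarrow> (take i F, drop i F)) \<in> PW n"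
      by (cases a) (auto simp: W_def PW_def simp flip: fw_append)
  qed (auto simp: W_def PW_def)
  finally show ?thesis .
qed

lemma G:
  fixes \<kappa>1 \<kappa>2 :: "forest \<Rightarrow> 'x \<Rightarrow> rat" and wt :: "'x \<Rightarrow> nat" and I :: "'i set"
  assumes fin: "finite I"
    and k1: "\<And>F y. \<kappa>1 F y \<noteq> 0 \<Longrightarrow> fw F = wt y"
    and k2: "\<And>F y. \<kappa>2 F y \<noteq> 0 \<Longrightarrow> fw F = wt y"
    and spl: "\<And>j. j \<in> I \<Longrightarrow> wt (l j) + wt (r j) = n"
  shows "(\<Sum>F\<in>W n. \<Sum>i\<le>length F. \<Sum>j\<in>I. \<kappa>1 (take i F) (l j) * \<kappa>2 (drop i F) (r j))
       = (\<Sum>j\<in>I. (\<Sum>F\<in>W (wt (l j)). \<kappa>1 F (l j)) * (\<Sum>F\<in>W (wt (r j)). \<kappa>2 F (r j)))"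
proof -
  have "(\<Sum>F\<in>W n. \<Sum>i\<le>length F. \<Sum>j\<in>I. \<kappa>1 (take i F) (l j) * \<kappa>2 (drop i F) (r j))
      = (\<Sum>(F1, F2)\<in>PW n. \<Sum>j\<in>I. \<kappa>1 F1 (l j) * \<kappa>2 F2 (r j))"
    by (rule L1)
  also have "\<dots> = (\<Sum>j\<in>I. \<Sum>(F1, F2)\<in>PW n. \<kappa>1 F1 (l j) * \<kappa>2 F2 (r j))"
    by (simp add: case_prod_unfold sum.swap[where A="PW n"])
  also have "\<dots> = (\<Sum>j\<in>I. (\<Sum>F\<in>W (wt (l j)). \<kappa>1 F (l j)) * (\<Sum>F\<in>W (wt (r j)). \<kappa>2 F (r j)))"
  proof (rule sum.cong[OF refl])
    fix j assume j: "j \<in> I"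
    have "(\<Sum>(F1, F2)\<in>PW n. \<kappa>1 F1 (l j) * \<kappa>2 F2 (r j))
        = (\<Sum>(F1, F2)\<in>W (wt (l j)) \<times> W (wt (r j)). \<kappa>1 F1 (l j) * \<kappa>2 F2 (r j))"
    proof (rule sum.mono_neutral_right)
      show "W (wt (l j)) \<times> W (wt (r j)) \<subseteq> PW n"
        using spl[OF j] by (auto simp: W_def PW_def)
      show "\<forall>i\<in>PW n - W (wt (l j)) \<times> W (wt (r j)). (case i of (F1, F2) \<Rightarrow> \<kappa>1 F1 (l j) * \<kappa>2 F2 (r j)) = 0"
        using k1 k2 by (fastforce simp: W_def)
    qed simp
    also have "\<dots> = (\<Sum>F\<in>W (wt (l j)). \<kappa>1 F (l j)) * (\<Sum>F\<in>W (wt (r j)). \<kappa>2 F (r j))"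
      by (simp add: sum_product sum.cartesian_product)
    finally show "(\<Sum>(F1, F2)\<in>PW n. \<kappa>1 F1 (l j) * \<kappa>2 F2 (r j)) = \<dots>" .
  qed
  finally show ?thesis .
qed



definition pprod :: "(forest \<times> forest) list \<Rightarrow> (forest \<times> forest) list \<Rightarrow> (forest \<times> forest) list" where
  "pprod A B = concat (map (\<lambda>(P, R). map (\<lambda>(P', R'). (P @ P', R @ R')) B) A)"

definition KF :: "(ptree \<Rightarrow> (forest \<times> forest) list) \<Rightarrow> forest \<Rightarrow> (forest \<times> forest) list" where
  "KF k F = map (\<lambda>cs. (concat (map fst cs), concat (map snd cs))) (product_lists (map k F))"

lemma pprod_Nil[simp]: "pprod [] B = []" by (simp add: pprod_def)
lemma pprod_Cons: "pprod ((P, R) # A) B = map (\<lambda>(P', R'). (P @ P', R @ R')) B @ pprod A B"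
  by (simp add: pprod_def)
lemma pprod_append: "pprod (A1 @ A2) B = pprod A1 B @ pprod A2 B"
  by (simp add: pprod_def)
lemma pprod_unit[simp]: "pprod [([], [])] B = B"
  by (simp add: pprod_def case_prod_unfold)
lemma pprod_map_app: "pprod (map (\<lambda>(P', R'). (P @ P', R @ R')) B) C
   = map (\<lambda>(P', R'). (P @ P', R @ R')) (pprod B C)"
  by (induction B) (auto simp: pprod_def)
lemma pprod_assoc: "pprod (pprod A B) C = pprod A (pprod B C)"
  by (induction A) (auto simp: pprod_Cons pprod_append pprod_map_app)

lemma KF_Nil[simp]: "KF k [] = [([], [])]" by (simp add: KF_def)
lemma KF_Cons: "KF k (t # F) = pprod (k t) (KF k F)"
  by (simp add: KF_def pprod_def map_concat comp_def case_prod_unfold)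
lemma KF_append: "KF k (F1 @ F2) = pprod (KF k F1) (KF k F2)"
  by (induction F1) (auto simp: KF_Cons pprod_assoc)

lemma cutsF_KF: "cutsF = KF cuts" by (simp add: cutsF_def KF_def fun_eq_iff)
lemma fcutsF_KF: "fcutsF = KF (fcuts True)" by (simp add: fcutsF_def KF_def fun_eq_iff)

definition SP :: "forest \<Rightarrow> forest \<Rightarrow> (nat \<times> nat) set" where
  "SP G H = {..length G} \<times> {..length H}"

lemma finite_SP[simp]: "finite (SP G H)" by (simp add: SP_def)

lemma count_map_app:
  "count_list (map (\<lambda>(P', R'). (P @ P', R @ R')) B) (G, H)
   = (\<Sum>(i, j)\<in>SP G H. if take i G = P \<and> take j H = R then count_list B (drop i G, drop j H) else 0)"
proof (cases "take (length P) G = P \<and> take (length R) H = R")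
  case True
  then have GH: "G = P @ drop (length P) G" "H = R @ drop (length R) H"
    by (metis append_take_drop_id)+
  have inj: "inj (\<lambda>(P', R'). (P @ P', R @ R'))" by (auto simp: inj_def)
  have "count_list (map (\<lambda>(P', R'). (P @ P', R @ R')) B) (G, H)
      = count_list (map (\<lambda>(P', R'). (P @ P', R @ R')) B) ((\<lambda>(P', R'). (P @ P', R @ R')) (drop (length P) G, drop (length R) H))"
    using GH by simp
  also have "\<dots> = count_list B (drop (length P) G, drop (length R) H)"
    by (rule count_list_map_conv[OF inj])
  also have "\<dots> = (\<Sum>(i, j)\<in>SP G H. if (i, j) = (length P, length R) then count_list B (drop i G, drop j H) else 0)"
  proof -
    have "length P \<le> length G" "length R \<le> length H" using GH
      by (metis le_add1 length_append)+
    then have mem: "(length P, length R) \<in> SP G H" by (simp add: SP_def)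
    have "(\<Sum>(i, j)\<in>SP G H. if (i, j) = (length P, length R) then count_list B (drop i G, drop j H) else 0)
      = (\<Sum>x\<in>SP G H. if x = (length P, length R) then count_list B (drop (fst x) G, drop (snd x) H) else 0)"
      by (rule sum.cong) (auto split: if_splits)
    also have "\<dots> = count_list B (drop (length P) G, drop (length R) H)"
      using mem by (simp add: sum.delta')
    finally show ?thesis by simp
  qed
  also have "\<dots> = (\<Sum>(i, j)\<in>SP G H. if take i G = P \<and> take j H = R then count_list B (drop i G, drop j H) else 0)"
    by (rule sum.cong[OF refl]) (auto simp: SP_def True)
  finally show ?thesis .
next
  case False
  have "count_list (map (\<lambda>(P', R'). (P @ P', R @ R')) B) (G, H) = 0"
    using False by (auto simp: count_list_0_iff)
  moreover have "\<forall>(i, j)\<in>SP G H. \<not> (take i G = P \<and> take j H = R)"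
    using False by (auto simp: SP_def)
  ultimately show ?thesis by (simp add: case_prod_unfold) blast
qed

lemma count_pprod:
  "count_list (pprod A B) (G, H)
   = (\<Sum>(i, j)\<in>SP G H. count_list A (take i G, take j H) * count_list B (drop i G, drop j H))"
proof (induction A)
  case Nil then show ?case by simp
next
  case (Cons a A)
  obtain P R where a: "a = (P, R)" by (cases a)
  show ?case
    unfolding a pprod_Cons count_list_append count_map_app Cons.IH sum.distrib[symmetric]
    by (rule sum.cong) auto
qed

lemma count_KF_append:
  "count_list (KF k (F1 @ F2)) (G, H)
   = (\<Sum>(i, j)\<in>SP G H. count_list (KF k F1) (take i G, take j H) * count_list (KF k F2) (drop i G, drop j H))"
  by (simp add: KF_append count_pprod)

lemma set_pprod: "x \<in> set (pprod A B) \<Longrightarrow> \<exists>P R P' R'. (P, R) \<in> set A \<and> (P', R') \<in> set B \<and> x = (P @ P', R @ R')"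
  by (auto simp: pprod_def)

lemma KF_weight:
  assumes "\<And>t P R. t \<in> set F \<Longrightarrow> (P, R) \<in> set (k t) \<Longrightarrow> fw P + fw R = tw t"
  shows "(P, R) \<in> set (KF k F) \<Longrightarrow> fw P + fw R = fw F"
  using assms
proof (induction F arbitrary: P R)
  case Nil then show ?case by simp
next
  case (Cons t F)
  from Cons.prems(1) obtain P1 R1 P2 R2 where "(P1, R1) \<in> set (k t)" "(P2, R2) \<in> set (KF k F)"
    "P = P1 @ P2" "R = R1 @ R2" by (auto simp: KF_Cons dest!: set_pprod)
  moreover have "fw P1 + fw R1 = tw t" using Cons.prems(2) \<open>(P1, R1) \<in> set (k t)\<close> by simp
  moreover have "fw P2 + fw R2 = fw F" using Cons.IH[of P2 R2] Cons.prems(2) \<open>(P2, R2) \<in> set (KF k F)\<close> by simp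
  ultimately show ?case by simp
qed

lemma cuts_Node: "cuts (Node ts) = ([Node ts], []) # map (\<lambda>(P, R). (P, [Node R])) (KF cuts ts)"
  by (simp add: KF_def comp_def case_prod_unfold)

definition K' :: "forest \<Rightarrow> (forest \<times> forest) list" where
  "K' ts = (case ts of [] \<Rightarrow> [([], [])] | t1 # ts' \<Rightarrow> pprod (fcuts False t1) (KF (fcuts True) ts'))"

lemma fcuts_Node: "fcuts b (Node ts) = (if b then [([Node ts], [])] else []) @ map (\<lambda>(P, R). (P, [Node R])) (K' ts)"
proof (cases ts)
  case Nil then show ?thesis by (simp add: K'_def)
next
  case (Cons t1 ts')
  have "product_lists (fcuts False t1 # map (fcuts True) ts') = product_lists (map (\<lambda>x. x) (fcuts False t1 # map (fcuts True) ts'))" by simp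
  then show ?thesis
    by (simp add: Cons K'_def pprod_def KF_def map_concat comp_def case_prod_unfold)
qed

lemma fcuts_True: "fcuts True t = ([t], []) # fcuts False t"
  by (cases t) (simp add: fcuts_Node)

lemma cuts_weight: "(P, R) \<in> set (cuts t) \<Longrightarrow> fw P + fw R = tw t"
proof (induction t arbitrary: P R rule: cuts.induct)
  case (1 ts)
  show ?case
  proof (cases "(P, R) = ([Node ts], [])")
    case False
    have "(P, R) \<in> set (map (\<lambda>(P, R). (P, [Node R])) (KF cuts ts))"
      using "1.prems" False unfolding cuts_Node by auto
    then obtain R' where "(P, R') \<in> set (KF cuts ts)" "R = [Node R']" by auto
    moreover have "fw P + fw R' = fw ts"
      by (rule KF_weight[OF _ calculation(1)]) (use "1.IH" in auto)
    ultimately show ?thesis by simp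
  qed simp
qed

lemma fcuts_weight: "(P, R) \<in> set (fcuts b t) \<Longrightarrow> fw P + fw R = tw t"
proof (induction b t arbitrary: P R rule: fcuts.induct)
  case (1 b)
  then show ?case by (auto split: if_splits)
next
  case (2 b t1 ts)
  show ?case
  proof (cases "(P, R) = ([Node (t1 # ts)], [])")
    case False
    have "(P, R) \<in> set (map (\<lambda>(P, R). (P, [Node R])) (K' (t1 # ts)))"
      using "2.prems" False unfolding fcuts_Node by (auto split: if_splits)
    then obtain R' where R': "(P, R') \<in> set (K' (t1 # ts))" "R = [Node R']" by auto
    from R'(1) obtain P1 R1 P2 R2 where A: "(P1, R1) \<in> set (fcuts False t1)" "(P2, R2) \<in> set (KF (fcuts True) ts)"
      "P = P1 @ P2" "R' = R1 @ R2" by (auto simp: K'_def dest!: set_pprod)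
    have "fw P2 + fw R2 = fw ts"
      by (rule KF_weight[OF _ A(2)]) (use "2.IH" in auto)
    moreover have "fw P1 + fw R1 = tw t1" using "2.IH"(1) A(1) by simp
    ultimately show ?thesis using A R' by simp
  qed simp
qed

lemma cutsF_weight: "(P, R) \<in> set (cutsF F) \<Longrightarrow> fw P + fw R = fw F"
  unfolding cutsF_KF by (rule KF_weight) (auto dest: cuts_weight)
lemma fcutsF_weight: "(P, R) \<in> set (fcutsF F) \<Longrightarrow> fw P + fw R = fw F"
  unfolding fcutsF_KF by (rule KF_weight) (auto dest: fcuts_weight)
lemma K'_weight: assumes "(P, R) \<in> set (K' F)" shows "fw P + fw R = fw F"
proof (cases F)
  case Nil then show ?thesis using assms by (simp add: K'_def)
next
  case (Cons t1 ts)
  from assms obtain P1 R1 P2 R2 where A: "(P1, R1) \<in> set (fcuts False t1)" "(P2, R2) \<in> set (KF (fcuts True) ts)"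
      "P = P1 @ P2" "R = R1 @ R2" by (auto simp: K'_def Cons dest!: set_pprod)
  have "fw P2 + fw R2 = fw ts"
    by (rule KF_weight[OF _ A(2)]) (auto dest: fcuts_weight)
  with A fcuts_weight[OF A(1)] show ?thesis by (simp add: Cons)
qed



section \<open>Basic algebra\<close>

lemma fmul_assoc: "fmul (fmul a b) c = fmul a (fmul b c)"
proof
  fix F :: forest
  let ?n = "length F"
  let ?g = "\<lambda>i j. a (take i F) * b (take j (drop i F)) * c (drop (i + j) F)"
  have "fmul a (fmul b c) F = (\<Sum>i\<le>?n. \<Sum>j\<le>?n - i. ?g i j)"
    by (simp add: fmul_def sum_distrib_left mult.assoc add.commute)
  also have "\<dots> = (\<Sum>(i, j)\<in>{(i, j). i + j \<le> ?n}. ?g i j)"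
  proof -
    have "{(i, j). i + j \<le> ?n} = Sigma {..?n} (\<lambda>i. {..?n - i})" by auto
    then show ?thesis by (simp add: sum.Sigma)
  qed
  also have "\<dots> = (\<Sum>k\<le>?n. \<Sum>i\<le>k. ?g i (k - i))"
    by (rule sum.triangle_reindex_eq)
  also have "\<dots> = fmul (fmul a b) c F"
    unfolding fmul_def sum_distrib_right
  proof (rule sum.cong[OF refl])
    fix k assume k: "k \<in> {..?n}"
    then have lk: "length (take k F) = k" by auto
    show "(\<Sum>i\<le>k. ?g i (k - i)) = (\<Sum>i\<le>length (take k F). a (take i (take k F)) * b (drop i (take k F)) * c (drop k F))"
      unfolding lk by (rule sum.cong[OF refl]) (simp add: take_drop min_def)
  qed
  finally show "fmul (fmul a b) c F = fmul a (fmul b c) F" by simp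
qed

lemma fmul_fone_left[simp]: "fmul fone a = a"
proof
  fix F
  have "fmul fone a F = (\<Sum>i\<le>length F. if i = 0 then a (drop i F) else 0)"
    unfolding fmul_def fone_def by (rule sum.cong) auto
  then show "fmul fone a F = a F" by (simp add: sum.delta)
qed

lemma fmul_fone_right[simp]: "fmul a fone = a"
proof
  fix F
  have "fmul a fone F = (\<Sum>i\<le>length F. if i = length F then a (take i F) else 0)"
    unfolding fmul_def fone_def by (rule sum.cong) auto
  then show "fmul a fone F = a F" by (simp add: sum.delta)
qed

lemma fmul_fadd_left: "fmul (fadd a b) c = fadd (fmul a c) (fmul b c)"
  by (simp add: fmul_def fadd_def fun_eq_iff sum.distrib distrib_right)
lemma fmul_fadd_right: "fmul c (fadd a b) = fadd (fmul c a) (fmul c b)"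
  by (simp add: fmul_def fadd_def fun_eq_iff sum.distrib distrib_left)
lemma fmul_smul_left: "fmul (smul r a) c = smul r (fmul a c)"
  by (simp add: fmul_def smul_def fun_eq_iff sum_distrib_left mult.assoc)
lemma fmul_smul_right: "fmul c (smul r a) = smul r (fmul c a)"
  by (simp add: fmul_def smul_def fun_eq_iff sum_distrib_left mult.left_commute)
lemma fmul_fsum_left: "fmul (fsum f K) c = fsum (\<lambda>k. fmul (f k) c) K"
  by (simp add: fmul_def fsum_def fun_eq_iff sum_distrib_right sum.swap[where A=K])
lemma fmul_fsum_right: "fmul c (fsum f K) = fsum (\<lambda>k. fmul c (f k)) K"
  by (simp add: fmul_def fsum_def fun_eq_iff sum_distrib_left sum.swap[where A=K])

section \<open>Linear maps given by kernels\<close>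

definition linK :: "(forest \<Rightarrow> (forest \<times> forest) list) \<Rightarrow> alg \<Rightarrow> alg2" where
  "linK K a = (\<lambda>(G, H). \<Sum>F\<in>W (fw G + fw H). a F * of_nat (count_list (K F) (G, H)))"

definition mul2 :: "alg2 \<Rightarrow> alg2 \<Rightarrow> alg2" where
  "mul2 X Y = (\<lambda>(G, H). \<Sum>(i, j)\<in>SP G H. X (take i G, take j H) * Y (drop i G, drop j H))"

definition tens :: "alg \<Rightarrow> alg \<Rightarrow> alg2" where
  "tens a b = (\<lambda>(G, H). a G * b H)"

lemma linK_mult:
  assumes wK: "\<And>F P R. (P, R) \<in> set (KF k F) \<Longrightarrow> fw P + fw R = fw F"
  shows "linK (KF k) (fmul a b) = mul2 (linK (KF k) a) (linK (KF k) b)"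
proof (rule ext, clarify)
  fix G H :: forest
  let ?n = "fw G + fw H"
  let ?k1 = "\<lambda>F (y :: forest \<times> forest). a F * of_nat (count_list (KF k F) y)"
  let ?k2 = "\<lambda>F (y :: forest \<times> forest). b F * of_nat (count_list (KF k F) y)"
  let ?l = "\<lambda>(i, j). (take i G, take j H)"
  let ?r = "\<lambda>(i, j). (drop i G, drop j H)"
  have "linK (KF k) (fmul a b) (G, H) =
     (\<Sum>F\<in>W ?n. \<Sum>i\<le>length F. \<Sum>j\<in>SP G H. ?k1 (take i F) (?l j) * ?k2 (drop i F) (?r j))"
  proof -
    have "\<And>F i. (\<Sum>j\<in>SP G H. ?k1 (take i F) (?l j) * ?k2 (drop i F) (?r j))
        = a (take i F) * b (drop i F) * of_nat (count_list (KF k (take i F @ drop i F)) (G, H))"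
      by (simp only: count_KF_append of_nat_sum of_nat_mult sum_distrib_left)
         (simp add: case_prod_unfold mult_ac)
    then show ?thesis
      by (simp add: linK_def fmul_def sum_distrib_right)
  qed
  also have "\<dots> = (\<Sum>j\<in>SP G H. (\<Sum>F\<in>W ((\<lambda>(P, R). fw P + fw R) (?l j)). ?k1 F (?l j)) *
                                (\<Sum>F\<in>W ((\<lambda>(P, R). fw P + fw R) (?r j)). ?k2 F (?r j)))"
  proof (rule G)
    show "\<And>F y. ?k1 F y \<noteq> 0 \<Longrightarrow> fw F = (\<lambda>(P, R). fw P + fw R) y"
    proof -
      fix F y assume "?k1 F y \<noteq> 0"
      then have "y \<in> set (KF k F)" by (metis count_notin mult_zero_right of_nat_0)
      moreover obtain P R where "y = (P, R)" by (cases y)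
      ultimately show "fw F = (\<lambda>(P, R). fw P + fw R) y" using wK[of P R F] by simp
    qed
    show "\<And>F y. ?k2 F y \<noteq> 0 \<Longrightarrow> fw F = (\<lambda>(P, R). fw P + fw R) y"
    proof -
      fix F y assume "?k2 F y \<noteq> 0"
      then have "y \<in> set (KF k F)" by (metis count_notin mult_zero_right of_nat_0)
      moreover obtain P R where "y = (P, R)" by (cases y)
      ultimately show "fw F = (\<lambda>(P, R). fw P + fw R) y" using wK[of P R F] by simp
    qed
    show "\<And>j. j \<in> SP G H \<Longrightarrow> (\<lambda>(P, R). fw P + fw R) (?l j) + (\<lambda>(P, R). fw P + fw R) (?r j) = ?n"
      by (clarsimp simp: SP_def) (metis append_take_drop_id fw_append add.assoc add.left_commute)
  qed simp
  also have "\<dots> = mul2 (linK (KF k) a) (linK (KF k) b) (G, H)"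
    by (simp add: mul2_def linK_def case_prod_unfold)
  finally show "linK (KF k) (fmul a b) (G, H) = mul2 (linK (KF k) a) (linK (KF k) b) (G, H)" .
qed

definition linM :: "(forest \<Rightarrow> alg) \<Rightarrow> alg \<Rightarrow> alg" where
  "linM M a = (\<lambda>G. \<Sum>F\<in>W (fw G). a F * M F G)"

lemma linM_mult:
  assumes wM: "\<And>F G. M F G \<noteq> 0 \<Longrightarrow> fw F = fw G"
    and mM: "\<And>F1 F2. M (F1 @ F2) = fmul (M F1) (M F2)"
  shows "linM M (fmul a b) = fmul (linM M a) (linM M b)"
proof
  fix G :: forest
  let ?k1 = "\<lambda>F y. a F * M F y"
  let ?k2 = "\<lambda>F y. b F * M F y"
  have "linM M (fmul a b) G =
     (\<Sum>F\<in>W (fw G). \<Sum>i\<le>length F. \<Sum>j\<in>{..length G}. ?k1 (take i F) (take j G) * ?k2 (drop i F) (drop j G))"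
  proof -
    have "\<And>F i. (\<Sum>j\<in>{..length G}. ?k1 (take i F) (take j G) * ?k2 (drop i F) (drop j G))
        = a (take i F) * b (drop i F) * M (take i F @ drop i F) G"
      by (simp only: mM) (simp add: fmul_def sum_distrib_left mult_ac)
    then show ?thesis
      by (simp add: linM_def fmul_def sum_distrib_right)
  qed
  also have "\<dots> = (\<Sum>j\<in>{..length G}. (\<Sum>F\<in>W (fw (take j G)). ?k1 F (take j G)) *
                                (\<Sum>F\<in>W (fw (drop j G)). ?k2 F (drop j G)))"
  proof (rule G)
    show "\<And>F y. ?k1 F y \<noteq> 0 \<Longrightarrow> fw F = fw y" using wM by auto
    show "\<And>F y. ?k2 F y \<noteq> 0 \<Longrightarrow> fw F = fw y" using wM by auto
    show "\<And>j. j \<in> {..length G} \<Longrightarrow> fw (take j G) + fw (drop j G) = fw G"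
      by (metis append_take_drop_id fw_append)
  qed simp
  also have "\<dots> = fmul (linM M a) (linM M b) G"
    by (simp add: fmul_def linM_def)
  finally show "linM M (fmul a b) G = fmul (linM M a) (linM M b) G" .
qed



fun kids :: "ptree \<Rightarrow> forest" where "kids (Node ts) = ts"

definition ones :: alg where "ones = (\<lambda>F. 1)"
definition Tall :: alg where "Tall = (\<lambda>F. if length F = 1 then 1 else 0)"

lemma ones_split: "ones = fadd fone (fmul Tall ones)"
proof
  fix F :: forest
  have "fmul Tall ones F = (\<Sum>i\<le>length F. if i = 1 then (if F = [] then 0 else 1) else 0)"
    unfolding fmul_def Tall_def ones_def by (rule sum.cong) (auto simp: min_def Suc_le_eq)
  also have "\<dots> = (if F = [] then 0 else 1)"
    by (cases F) (simp_all only: sum.delta[OF finite_atMost], simp_all)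
  finally show "ones F = fadd fone (fmul Tall ones) F"
    by (simp add: fadd_def fone_def ones_def)
qed

lemma linK_fadd: "linK K (fadd a b) = (\<lambda>x. linK K a x + linK K b x)"
  by (simp add: linK_def fadd_def fun_eq_iff sum.distrib distrib_right)

lemma linK_fone: "linK (KF k) fone (G, H) = (if G = [] \<and> H = [] then 1 else 0)"
proof -
  have "linK (KF k) fone (G, H) = (\<Sum>F\<in>W (fw G + fw H). if F = [] then of_nat (count_list (KF k F) (G, H)) else 0)"
    unfolding linK_def fone_def prod.case by (rule sum.cong) auto
  also have "\<dots> = (if G = [] \<and> H = [] then 1 else 0)"
    by (simp add: sum.delta) (auto simp: W_def)
  finally show ?thesis .
qed

lemma pprod_unit_right[simp]: "pprod A [([], [])] = A"
  by (induction A) (auto simp: pprod_def)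

lemma KF_single[simp]: "KF k [t] = k t"
  by (simp add: KF_Cons)

lemma sum_W_single:
  fixes w :: nat
  shows "(\<Sum>F\<in>W w. if length F = 1 then f F else 0) = (if w = 0 then 0 else \<Sum>ts\<in>W (w - 1). f [Node ts])"
proof (cases w)
  case 0 then show ?thesis by (simp add: W_def)
next
  case (Suc m)
  have "(\<Sum>F\<in>W w. if length F = 1 then f F else 0) = (\<Sum>F\<in>{F\<in>W w. length F = 1}. f F)"
    by (simp add: sum.inter_filter)
  also have "{F\<in>W w. length F = 1} = (\<lambda>ts. [Node ts]) ` W m"
  proof (rule set_eqI, rule iffI)
    fix F assume "F \<in> {F\<in>W w. length F = 1}"
    then obtain t where "F = [t]" "tw t = w" by (auto simp: W_def length_Suc_conv)
    then show "F \<in> (\<lambda>ts. [Node ts]) ` W m" using Suc by (cases t) (auto simp: W_def)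
  qed (auto simp: W_def Suc)
  also have "(\<Sum>F\<in>(\<lambda>ts. [Node ts]) ` W m. f F) = (\<Sum>ts\<in>W m. f [Node ts])"
    by (rule sum.reindex_cong[where l="\<lambda>ts. [Node ts]"]) (auto simp: inj_on_def)
  finally show ?thesis using Suc by simp
qed

lemma count_map_node:
  "count_list (map (\<lambda>(P, R). (P, [Node R])) L) (G, H)
   = (if length H = 1 then count_list L (G, kids (hd H)) else 0)"
proof (cases "length H = 1")
  case True
  then obtain t where H: "H = [t]" by (auto simp: length_Suc_conv)
  obtain r where t: "t = Node r" by (cases t)
  have inj: "inj (\<lambda>(P, R). (P, [Node R]))" by (auto simp: inj_def)
  have "count_list (map (\<lambda>(P, R). (P, [Node R])) L) ((\<lambda>(P, R). (P, [Node R])) (G, r)) = count_list L (G, r)"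
    by (rule count_list_map_conv[OF inj])
  then show ?thesis by (simp add: H t)
next
  case False
  then show ?thesis by (auto simp: count_list_0_iff)
qed

lemma linK_Tall:
  assumes kN: "\<And>ts. k (Node ts) = ([Node ts], []) # map (\<lambda>(P, R). (P, [Node R])) (L ts)"
    and wL: "\<And>F P R. (P, R) \<in> set (L F) \<Longrightarrow> fw P + fw R = fw F"
  shows "linK (KF k) Tall (G, H) = (if length G = 1 \<and> H = [] then 1 else 0)
            + (if length H = 1 then linK L ones (G, kids (hd H)) else 0)"
proof -
  let ?w = "fw G + fw H"
  have "linK (KF k) Tall (G, H) = (\<Sum>F\<in>W ?w. if length F = 1 then of_nat (count_list (KF k F) (G, H)) else 0)"
    unfolding linK_def Tall_def prod.case by (rule sum.cong) auto
  also have "\<dots> = (if ?w = 0 then 0 else \<Sum>ts\<in>W (?w - 1). of_nat (count_list (KF k [Node ts]) (G, H)))"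
    by (rule sum_W_single)
  also have "\<dots> = (if ?w = 0 then 0 else
      (\<Sum>ts\<in>W (?w - 1). (if G = [Node ts] \<and> H = [] then 1 else 0)) +
      (\<Sum>ts\<in>W (?w - 1). if length H = 1 then of_nat (count_list (L ts) (G, kids (hd H))) else 0))"
    by (cases "?w = 0") (auto simp: kN count_map_node sum.distrib[symmetric] intro!: sum.cong)
  also have "\<dots> = (if length G = 1 \<and> H = [] then 1 else 0)
            + (if length H = 1 then linK L ones (G, kids (hd H)) else 0)"
  proof (cases "?w = 0")
    case True
    then show ?thesis by auto
  next
    case False
    have A: "(\<Sum>ts\<in>W (?w - 1). (if G = [Node ts] \<and> H = [] then 1 else 0) :: rat)
          = (if length G = 1 \<and> H = [] then 1 else 0)"
    proof (cases "length G = 1 \<and> H = []")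
      case True
      then obtain t where G: "G = [t]" by (auto simp: length_Suc_conv)
      obtain r where t: "t = Node r" by (cases t)
      have "(\<Sum>ts\<in>W (?w - 1). (if G = [Node ts] \<and> H = [] then 1 else 0) :: rat)
          = (\<Sum>ts\<in>W (?w - 1). (if ts = r then 1 else 0))"
        using True by (intro sum.cong) (auto simp: G t)
      also have "\<dots> = 1" using True by (simp add: sum.delta) (simp add: W_def G t)
      finally show ?thesis using True by simp
    next
      case False
      then show ?thesis by (auto intro!: sum.neutral)
    qed
    have B: "(\<Sum>ts\<in>W (?w - 1). if length H = 1 then of_nat (count_list (L ts) (G, kids (hd H))) else 0)
          = (if length H = 1 then linK L ones (G, kids (hd H)) else 0)"
    proof (cases "length H = 1")
      case True
      then obtain t where H: "H = [t]" by (auto simp: length_Suc_conv)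
      obtain r where t: "t = Node r" by (cases t)
      show ?thesis using True by (simp add: linK_def ones_def H t)
    qed simp
    show ?thesis using False A B by simp
  qed
  finally show ?thesis .
qed

lemma recursion:
  assumes wK: "\<And>F P R. (P, R) \<in> set (KF k F) \<Longrightarrow> fw P + fw R = fw F"
    and T: "\<And>G H. linK (KF k) Tall (G, H) = (if length G = 1 \<and> H = [] then 1 else 0)
            + (if length H = 1 then Z (G, kids (hd H)) else 0)"
  shows "linK (KF k) ones (G, H) = (if G = [] \<and> H = [] then 1 else 0)
     + (if G \<noteq> [] then linK (KF k) ones (tl G, H) else 0)
     + (if H \<noteq> [] then (\<Sum>i\<le>length G. Z (take i G, kids (hd H)) * linK (KF k) ones (drop i G, tl H)) else 0)"
proof -
  let ?X = "linK (KF k) ones"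
  have "?X (G, H) = linK (KF k) fone (G, H) + mul2 (linK (KF k) Tall) ?X (G, H)"
    by (subst ones_split) (simp add: linK_fadd linK_mult[OF wK])
  also have "mul2 (linK (KF k) Tall) ?X (G, H)
     = (\<Sum>(i, j)\<in>SP G H. (if (i, j) = (1, 0) \<and> G \<noteq> [] then ?X (drop i G, drop j H) else 0))
     + (\<Sum>(i, j)\<in>SP G H. (if j = 1 \<and> H \<noteq> [] then Z (take i G, kids (hd H)) * ?X (drop i G, drop j H) else 0))"
    unfolding mul2_def T sum.distrib[symmetric] split_def
    by (rule sum.cong) (auto simp: SP_def length_take min_def take_Suc hd_conv_nth split: if_splits)
  also have "(\<Sum>(i, j)\<in>SP G H. (if (i, j) = (1, 0) \<and> G \<noteq> [] then ?X (drop i G, drop j H) else 0))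
     = (if G \<noteq> [] then ?X (tl G, H) else 0)"
  proof (cases "G = []")
    case False
    have "(\<Sum>(i, j)\<in>SP G H. (if (i, j) = (1, 0) \<and> G \<noteq> [] then ?X (drop i G, drop j H) else 0))
       = (\<Sum>x\<in>SP G H. (if x = (1, 0) then ?X (drop (fst x) G, drop (snd x) H) else 0))"
      using False by (intro sum.cong) (auto simp: case_prod_unfold)
    also have "\<dots> = ?X (tl G, H)" using False by (simp add: sum.delta' SP_def drop_Suc Suc_le_eq)
    finally show ?thesis using False by simp
  qed simp
  also have "(\<Sum>(i, j)\<in>SP G H. (if j = 1 \<and> H \<noteq> [] then Z (take i G, kids (hd H)) * ?X (drop i G, drop j H) else 0))
     = (if H \<noteq> [] then (\<Sum>i\<le>length G. Z (take i G, kids (hd H)) * ?X (drop i G, tl H)) else 0)"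
  proof (cases "H = []")
    case False
    have "(\<Sum>(i, j)\<in>SP G H. (if j = 1 \<and> H \<noteq> [] then Z (take i G, kids (hd H)) * ?X (drop i G, drop j H) else 0))
      = (\<Sum>i\<le>length G. \<Sum>j\<le>length H. (if j = 1 then Z (take i G, kids (hd H)) * ?X (drop i G, drop j H) else 0))"
      using False unfolding SP_def sum.cartesian_product[symmetric] by simp
    also have "\<dots> = (\<Sum>i\<le>length G. Z (take i G, kids (hd H)) * ?X (drop i G, tl H))"
      using False by (intro sum.cong) (auto simp: sum.delta drop_Suc Suc_le_eq)
    finally show ?thesis using False by simp
  qed simp
  finally show ?thesis by (simp add: linK_fone)
qed



lemma swap_tri: fixes m :: nat shows "(\<Sum>i\<le>m. \<Sum>l\<le>i. g l i) = (\<Sum>l\<le>m. \<Sum>i\<in>{l..m}. g l i :: nat)"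
proof (induction m)
  case 0 then show ?case by simp
next
  case (Suc m)
  have "(\<Sum>l\<le>Suc m. \<Sum>i\<in>{l..Suc m}. g l i) = (\<Sum>l\<le>m. \<Sum>i\<in>{l..Suc m}. g l i) + g (Suc m) (Suc m)"
    by simp
  also have "(\<Sum>l\<le>m. \<Sum>i\<in>{l..Suc m}. g l i) = (\<Sum>l\<le>m. (\<Sum>i\<in>{l..m}. g l i) + g l (Suc m))"
    by (rule sum.cong) (auto simp: atLeastAtMostSuc_conv)
  finally show ?case using Suc by (simp add: sum.distrib)
qed

lemma rev_sum: fixes m :: nat shows "(\<Sum>i\<le>m. f (m - i)) = (\<Sum>j\<le>m. f j :: nat)"
  by (rule sum.reindex_bij_witness[where i="\<lambda>j. m - j" and j="\<lambda>i. m - i"]) auto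

lemma rev_sum2: fixes m :: nat shows "l \<le> m \<Longrightarrow> (\<Sum>i\<in>{l..m}. f (m - i)) = (\<Sum>j\<le>m - l. f j :: nat)"
  by (rule sum.reindex_bij_witness[where i="\<lambda>j. m - j" and j="\<lambda>i. m - i"]) auto

lemma vdm: fixes m :: nat shows "(\<Sum>i\<le>m. ((i + p) choose i) * ((m - i + q) choose (m - i))) = (m + p + q + 1) choose m"
proof (induction p arbitrary: q)
  case 0
  have "(\<Sum>i\<le>m. ((i + 0) choose i) * ((m - i + q) choose (m - i))) = (\<Sum>i\<le>m. (q + (m - i)) choose (m - i))"
    by (simp add: add.commute)
  also have "\<dots> = (\<Sum>j\<le>m. (q + j) choose j)" by (rule rev_sum)
  also have "\<dots> = (m + 0 + q + 1) choose m" by (subst sum_choose_lower) (simp add: add.commute)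
  finally show ?case .
next
  case (Suc p)
  have "(\<Sum>i\<le>m. ((i + Suc p) choose i) * ((m - i + q) choose (m - i)))
      = (\<Sum>i\<le>m. \<Sum>l\<le>i. ((p + l) choose l) * ((m - i + q) choose (m - i)))"
    by (simp only: sum_distrib_right[symmetric] sum_choose_lower) (simp add: add.commute)
  also have "\<dots> = (\<Sum>l\<le>m. \<Sum>i\<in>{l..m}. ((p + l) choose l) * ((m - i + q) choose (m - i)))"
    by (rule swap_tri)
  also have "\<dots> = (\<Sum>l\<le>m. ((l + p) choose l) * ((m - l + (q + 1)) choose (m - l)))"
  proof (rule sum.cong[OF refl])
    fix l assume "l \<in> {..m}"
    then have lm: "l \<le> m" by simp
    have "(\<Sum>i\<in>{l..m}. (m - i + q) choose (m - i)) = (\<Sum>j\<le>m - l. (q + j) choose j)"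
      using rev_sum2[OF lm, of "\<lambda>j. (q + j) choose j"] by (simp add: add.commute)
    also have "\<dots> = (m - l + (q + 1)) choose (m - l)" by (subst sum_choose_lower) (simp add: add.commute)
    finally show "(\<Sum>i\<in>{l..m}. ((p + l) choose l) * ((m - i + q) choose (m - i)))
        = ((l + p) choose l) * ((m - l + (q + 1)) choose (m - l))"
      by (simp add: sum_distrib_left[symmetric] add.commute)
  qed
  also have "\<dots> = (m + Suc p + q + 1) choose m" using Suc[of "q + 1"] by simp
  finally show ?case .
qed



definition X :: alg2 where "X = linK (KF cuts) ones"
definition XF :: alg2 where "XF = linK (KF (fcuts True)) ones"
definition Y :: alg2 where "Y = linK K' ones"

lemma KF_cuts_weight: "(P, R) \<in> set (KF cuts F) \<Longrightarrow> fw P + fw R = fw F"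
  using cutsF_weight by (simp add: cutsF_KF)
lemma KF_fcuts_weight: "(P, R) \<in> set (KF (fcuts True) F) \<Longrightarrow> fw P + fw R = fw F"
  using fcutsF_weight by (simp add: fcutsF_KF)

lemma fcuts_True_Node: "fcuts True (Node ts) = ([Node ts], []) # map (\<lambda>(P, R). (P, [Node R])) (K' ts)"
  using fcuts_Node[of True ts] by simp

lemma X_rec: "X (G, H) = (if G = [] \<and> H = [] then 1 else 0)
     + (if G \<noteq> [] then X (tl G, H) else 0)
     + (if H \<noteq> [] then (\<Sum>i\<le>length G. X (take i G, kids (hd H)) * X (drop i G, tl H)) else 0)"
  unfolding X_def
  by (rule recursion[OF KF_cuts_weight linK_Tall[OF cuts_Node KF_cuts_weight]])

lemma XF_rec: "XF (G, H) = (if G = [] \<and> H = [] then 1 else 0)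
     + (if G \<noteq> [] then XF (tl G, H) else 0)
     + (if H \<noteq> [] then (\<Sum>i\<le>length G. Y (take i G, kids (hd H)) * XF (drop i G, tl H)) else 0)"
  unfolding XF_def Y_def
  by (rule recursion[OF KF_fcuts_weight linK_Tall[OF fcuts_True_Node K'_weight]])

lemma count_map_cons:
  "count_list (map (\<lambda>(P', R'). (t # P', R')) L) (G, H)
   = (if G \<noteq> [] \<and> hd G = t then count_list L (tl G, H) else 0)"
proof (cases "G \<noteq> [] \<and> hd G = t")
  case True
  then have G: "G = t # tl G" by auto
  have inj: "inj (\<lambda>(P', R'). (t # P', R'))" by (auto simp: inj_def)
  have "count_list (map (\<lambda>(P', R'). (t # P', R')) L) ((\<lambda>(P', R'). (t # P', R')) (tl G, H)) = count_list L (tl G, H)"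
    by (rule count_list_map_conv[OF inj])
  then show ?thesis using True G by simp
next
  case False
  then show ?thesis by (auto simp: count_list_0_iff)
qed

lemma count_KF_fc:
  "count_list (KF (fcuts True) F) (G, H) = count_list (K' F) (G, H)
     + (if F \<noteq> [] \<and> G \<noteq> [] \<and> hd G = hd F then count_list (KF (fcuts True) (tl F)) (tl G, H) else 0)"
proof (cases F)
  case Nil then show ?thesis by (simp add: K'_def)
next
  case (Cons t F')
  have "KF (fcuts True) F = map (\<lambda>(P', R'). (t # P', R')) (KF (fcuts True) F') @ K' F"
    by (simp add: Cons KF_Cons fcuts_True pprod_Cons K'_def)
  then show ?thesis by (simp add: count_map_cons Cons)
qed

lemma sum_W_cons:
  fixes w :: nat
  assumes "tw g \<le> w"
  shows "(\<Sum>F\<in>W w. if F \<noteq> [] \<and> hd F = g then f (tl F) else 0) = (\<Sum>F\<in>W (w - tw g). f F)"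
proof -
  have "(\<Sum>F\<in>W w. if F \<noteq> [] \<and> hd F = g then f (tl F) else 0) = (\<Sum>F\<in>{F\<in>W w. F \<noteq> [] \<and> hd F = g}. f (tl F))"
    by (simp add: sum.inter_filter)
  also have "{F\<in>W w. F \<noteq> [] \<and> hd F = g} = Cons g ` W (w - tw g)"
  proof (rule set_eqI, rule iffI)
    fix F assume "F \<in> {F\<in>W w. F \<noteq> [] \<and> hd F = g}"
    then show "F \<in> Cons g ` W (w - tw g)"
      by (cases F) (auto simp: W_def)
  qed (use assms in \<open>auto simp: W_def\<close>)
  also have "(\<Sum>F\<in>Cons g ` W (w - tw g). f (tl F)) = (\<Sum>F\<in>W (w - tw g). f F)"
    by (rule sum.reindex_cong[where l="Cons g"]) auto
  finally show ?thesis .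
qed

lemma Y_XF: "Y (G, H) = XF (G, H) - (if G \<noteq> [] then XF (tl G, H) else 0)"
proof -
  let ?w = "fw G + fw H"
  have "XF (G, H) = Y (G, H) + (\<Sum>F\<in>W ?w. if F \<noteq> [] \<and> G \<noteq> [] \<and> hd G = hd F then of_nat (count_list (KF (fcuts True) (tl F)) (tl G, H)) else 0)"
    unfolding XF_def Y_def linK_def ones_def prod.case
    by (auto simp: count_KF_fc sum.distrib[symmetric] intro!: sum.cong)
  also have "(\<Sum>F\<in>W ?w. if F \<noteq> [] \<and> G \<noteq> [] \<and> hd G = hd F then of_nat (count_list (KF (fcuts True) (tl F)) (tl G, H)) else 0 :: rat)
     = (if G \<noteq> [] then XF (tl G, H) else 0)"
  proof (cases G)
    case (Cons g G')
    have "(\<Sum>F\<in>W ?w. if F \<noteq> [] \<and> G \<noteq> [] \<and> hd G = hd F then of_nat (count_list (KF (fcuts True) (tl F)) (tl G, H)) else 0 :: rat)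
       = (\<Sum>F\<in>W ?w. if F \<noteq> [] \<and> hd F = g then of_nat (count_list (KF (fcuts True) (tl F)) (G', H)) else 0)"
      by (rule sum.cong) (auto simp: Cons)
    also have "\<dots> = (\<Sum>F\<in>W (?w - tw g). of_nat (count_list (KF (fcuts True) F) (G', H)))"
      by (rule sum_W_cons) (simp add: Cons)
    also have "\<dots> = XF (tl G, H)"
      by (simp add: XF_def linK_def ones_def Cons)
    finally show ?thesis by (simp add: Cons)
  qed simp
  finally show ?thesis by simp
qed

lemma pascal: "Suc n choose Suc k = (n choose k) + (n choose Suc k)" by simp

lemma X_closed: "X (G, H) = of_nat ((length G + 2 * fw H) choose length G)"
proof (induction "fw H" arbitrary: G H rule: less_induct)
  case less
  show ?case
  proof (induction G)
    case Nil
    show ?case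
    proof (cases H)
      case Nil then show ?thesis by (subst X_rec) simp
    next
      case (Cons h H')
      obtain r where h: "h = Node r" by (cases h)
      have "X ([], H) = X ([], r) * X ([], H')" by (subst X_rec) (simp add: Cons h)
      also have "\<dots> = 1" using less[of r "[]"] less[of H' "[]"] by (simp add: Cons h)
      finally show ?thesis by simp
    qed
  next
    case (Cons g G')
    let ?m = "length G'"
    show ?case
    proof (cases H)
      case Nil
      then show ?thesis using Cons.IH by (subst X_rec) simp
    next
      case HC: (Cons h H')
      obtain r where h: "h = Node r" by (cases h)
      have fwH: "fw H = Suc (fw r) + fw H'" by (simp add: HC h)
      have "(\<Sum>i\<le>length (g # G'). X (take i (g # G'), kids (hd H)) * X (drop i (g # G'), tl H))
         = (\<Sum>i\<le>Suc ?m. of_nat ((i + 2 * fw r) choose i) * of_nat ((Suc ?m - i + 2 * fw H') choose (Suc ?m - i)))"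
        using less[of r] less[of H'] by (intro sum.cong) (auto simp: HC h min_def)
      also have "\<dots> = of_nat ((Suc ?m + 2 * fw r + 2 * fw H' + 1) choose Suc ?m)"
        by (simp only: of_nat_mult[symmetric] of_nat_sum[symmetric] vdm)
      finally have S: "(\<Sum>i\<le>length (g # G'). X (take i (g # G'), kids (hd H)) * X (drop i (g # G'), tl H))
         = of_nat ((Suc ?m + 2 * fw r + 2 * fw H' + 1) choose Suc ?m)" .
      have "X (g # G', H) = X (G', H) + of_nat ((Suc ?m + 2 * fw r + 2 * fw H' + 1) choose Suc ?m)"
        by (subst X_rec) (simp only: S, simp add: HC)
      also have "\<dots> = of_nat ((length (g # G') + 2 * fw H) choose length (g # G'))"
      proof -
        have "(length (g # G') + 2 * fw H) = Suc (?m + 2 * fw H)" by simp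
        moreover have "?m + 2 * fw H = Suc ?m + 2 * fw r + 2 * fw H' + 1" using fwH by simp
        ultimately show ?thesis using Cons.IH
          by (simp only: pascal) (simp add: fwH)
      qed
      finally show ?thesis .
    qed
  qed
qed

lemma Yc: "(of_nat ((i + a) choose i) - (if i \<noteq> 0 then of_nat ((i - 1 + a) choose (i - 1)) else 0) :: rat)
   = of_nat ((i + a - 1) choose i)"
proof (cases i)
  case 0 then show ?thesis by simp
next
  case (Suc j)
  have "(Suc j + a) choose Suc j = ((j + a) choose j) + ((j + a) choose Suc j)"
    using pascal[of "j + a" j] by simp
  then show ?thesis by (simp add: Suc)
qed

lemma vdm2: "(\<Sum>i\<le>m. ((i + a - 1) choose i) * ((m - i + b) choose (m - i))) = (m + a + b) choose m"
proof (cases a)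
  case 0
  have "(\<Sum>i\<le>m. ((i + a - 1) choose i) * ((m - i + b) choose (m - i)))
     = ((0 + a - 1) choose 0) * ((m - 0 + b) choose (m - 0)) + (\<Sum>i<m. ((Suc i + a - 1) choose Suc i) * ((m - Suc i + b) choose (m - Suc i)))"
    by (rule sum.atMost_shift)
  also have "(\<Sum>i<m. ((Suc i + a - 1) choose Suc i) * ((m - Suc i + b) choose (m - Suc i))) = 0"
    using 0 by (intro sum.neutral) auto
  finally show ?thesis using 0 by simp
next
  case (Suc p)
  then show ?thesis using vdm[where m=m and p=p and q=b] by simp
qed

lemma XF_closed: "XF (G, H) = of_nat ((length G + fw H) choose length G)"
proof (induction "fw H" arbitrary: G H rule: less_induct)
  case less
  show ?case
  proof (induction G)
    case Nil
    show ?case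
    proof (cases H)
      case Nil then show ?thesis by (subst XF_rec) simp
    next
      case (Cons h H')
      obtain r where h: "h = Node r" by (cases h)
      have "XF ([], H) = Y ([], r) * XF ([], H')" by (subst XF_rec) (simp add: Cons h)
      also have "\<dots> = 1" using less[of r "[]"] less[of H' "[]"] by (simp add: Cons h Y_XF)
      finally show ?thesis by simp
    qed
  next
    case (Cons g G')
    let ?m = "length G'"
    show ?case
    proof (cases H)
      case Nil
      then show ?thesis using Cons.IH by (subst XF_rec) simp
    next
      case HC: (Cons h H')
      obtain r where h: "h = Node r" by (cases h)
      have fwH: "fw H = Suc (fw r) + fw H'" by (simp add: HC h)
      have "(\<Sum>i\<le>length (g # G'). Y (take i (g # G'), kids (hd H)) * XF (drop i (g # G'), tl H))
         = (\<Sum>i\<le>Suc ?m. of_nat ((i + fw r - 1) choose i) * of_nat ((Suc ?m - i + fw H') choose (Suc ?m - i)))"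
      proof (rule sum.cong)
        fix i assume i: "i \<in> {..Suc ?m}"
        define P where "P = take i (g # G')"
        have lP: "length P = i" using i by (simp add: P_def)
        have "Y (P, r) = of_nat ((length P + fw r) choose length P) - (if P \<noteq> [] then of_nat ((length (tl P) + fw r) choose length (tl P)) else 0)"
          using less[of r P] less[of r "tl P"] by (simp add: Y_XF HC h)
        also have "\<dots> = of_nat ((i + fw r - 1) choose i)"
          using Yc[of i "fw r"] lP by (cases "P = []") (auto simp: add.commute)
        finally have "Y (take i (g # G'), r) = of_nat ((i + fw r - 1) choose i)" by (simp add: P_def)
        moreover have "XF (drop i (g # G'), H') = of_nat ((Suc ?m - i + fw H') choose (Suc ?m - i))"
          using less[of H' "drop i (g # G')"] by (simp add: HC h)
        ultimately show "Y (take i (g # G'), kids (hd H)) * XF (drop i (g # G'), tl H)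
           = of_nat ((i + fw r - 1) choose i) * of_nat ((Suc ?m - i + fw H') choose (Suc ?m - i))"
          by (simp add: HC h)
      qed simp
      also have "\<dots> = of_nat ((Suc ?m + fw r + fw H') choose Suc ?m)"
        by (simp only: of_nat_mult[symmetric] of_nat_sum[symmetric] vdm2)
      finally have S: "(\<Sum>i\<le>length (g # G'). Y (take i (g # G'), kids (hd H)) * XF (drop i (g # G'), tl H))
         = of_nat ((Suc ?m + fw r + fw H') choose Suc ?m)" .
      have "XF (g # G', H) = XF (G', H) + of_nat ((Suc ?m + fw r + fw H') choose Suc ?m)"
        by (subst XF_rec) (simp only: S, simp add: HC)
      also have "\<dots> = of_nat ((length (g # G') + fw H) choose length (g # G'))"
      proof -
        have "(length (g # G') + fw H) = Suc (?m + fw H)" by simp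
        moreover have "?m + fw H = Suc ?m + fw r + fw H'" using fwH by simp
        ultimately show ?thesis using Cons.IH
          by (simp only: pascal) (simp add: fwH)
      qed
      finally show ?thesis .
    qed
  qed
qed



lemma u0: "u 0 = fone" by (simp add: u_def fone_def fun_eq_iff)

lemma fsum_empty: "fsum f {} = smul 0 fone" by (simp add: fsum_def smul_def fun_eq_iff)
lemma fsum_insert: "finite K \<Longrightarrow> k \<notin> K \<Longrightarrow> fsum f (insert k K) = fadd (f k) (fsum f K)"
  by (simp add: fsum_def fadd_def fun_eq_iff)

lemma Hs_fone: "fone \<in> Hs" by (rule Hs.one)
lemma Hs_u: "u n \<in> Hs" by (cases n) (auto simp: u0 intro: Hs.intros)

lemma Hs_fsum: assumes "finite K" "\<And>k. k \<in> K \<Longrightarrow> f k \<in> Hs" shows "fsum f K \<in> Hs"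
  using assms
proof (induction K rule: finite_induct)
  case empty then show ?case by (simp add: fsum_empty Hs.intros)
next
  case (insert k K) then show ?case by (simp add: fsum_insert Hs.intros)
qed

section \<open>Finite support\<close>

lemma fsupp_Hs: "x \<in> Hs \<Longrightarrow> fsupp x"
proof (induction rule: Hs.induct)
  case (gen n)
  show ?case unfolding fsupp_def
    by (rule finite_subset[OF _ finite_W[of n]]) (auto simp: u_def W_def split: if_splits)
next
  case one
  show ?case unfolding fsupp_def
    by (rule finite_subset[of _ "{[]}"]) (auto simp: fone_def split: if_splits)
next
  case (add a b)
  have "{F. fadd a b F \<noteq> 0} \<subseteq> {F. a F \<noteq> 0} \<union> {F. b F \<noteq> 0}" by (auto simp: fadd_def)
  then show ?case using add unfolding fsupp_def by (meson finite_UnI finite_subset)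
next
  case (smul a c)
  have "{F. smul c a F \<noteq> 0} \<subseteq> {F. a F \<noteq> 0}" by (auto simp: smul_def)
  then show ?case using smul unfolding fsupp_def by (meson finite_subset)
next
  case (mul a b)
  have "{F. fmul a b F \<noteq> 0} \<subseteq> (\<lambda>(x, y). x @ y) ` ({F. a F \<noteq> 0} \<times> {F. b F \<noteq> 0})"
  proof
    fix F assume "F \<in> {F. fmul a b F \<noteq> 0}"
    then obtain i where "a (take i F) * b (drop i F) \<noteq> 0"
      by (auto simp: fmul_def elim!: sum.not_neutral_contains_not_neutral)
    then show "F \<in> (\<lambda>(x, y). x @ y) ` ({F. a F \<noteq> 0} \<times> {F. b F \<noteq> 0})"
      by (intro image_eqI[where x="(take i F, drop i F)"]) auto
  qed
  then show ?case using mul unfolding fsupp_def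
    by (meson finite_SigmaI finite_imageI finite_subset)
qed

lemma linK_eq_cop:
  assumes fs: "fsupp a" and wK: "\<And>F P R. (P, R) \<in> set (K F) \<Longrightarrow> fw P + fw R = fw F"
  shows "(\<lambda>p. \<Sum>F\<in>{F. a F \<noteq> 0}. a F * of_nat (count_list (K F) p)) = linK K a"
proof (rule ext, clarify)
  fix G H :: forest
  let ?S = "{F. a F \<noteq> 0}"
  have fin: "finite ?S" using fs by (simp add: fsupp_def)
  have "(\<Sum>F\<in>?S. a F * of_nat (count_list (K F) (G, H))) = (\<Sum>F\<in>?S \<inter> W (fw G + fw H). a F * of_nat (count_list (K F) (G, H)))"
  proof (rule sum.mono_neutral_right[OF fin])
    show "\<forall>F\<in>?S - ?S \<inter> W (fw G + fw H). a F * of_nat (count_list (K F) (G, H)) = 0"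
      using wK by (auto simp: W_def count_list_0_iff)
  qed auto
  also have "\<dots> = (\<Sum>F\<in>W (fw G + fw H). a F * of_nat (count_list (K F) (G, H)))"
    by (rule sum.mono_neutral_left) auto
  finally show "(\<Sum>F\<in>?S. a F * of_nat (count_list (K F) (G, H))) = linK K a (G, H)"
    by (simp add: linK_def)
qed

lemma cop_linK: "fsupp a \<Longrightarrow> cop a = linK (KF cuts) a"
  unfolding cop_def cutsF_KF by (rule linK_eq_cop) (auto dest: KF_cuts_weight)
lemma copFr_linK: "fsupp a \<Longrightarrow> copFr a = linK (KF (fcuts True)) a"
  unfolding copFr_def fcutsF_KF by (rule linK_eq_cop) (auto dest: KF_fcuts_weight)

definition qq :: "nat \<Rightarrow> nat \<Rightarrow> alg" where
  "qq a s = (\<lambda>G. if fw G = s then of_nat ((length G + a) choose length G) else 0)"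

lemma qq0: "qq 0 s = u s" by (simp add: qq_def u_def fun_eq_iff)

lemma qconv: "qq (a + b + 1) s = fsum (\<lambda>i. fmul (qq a i) (qq b (s - i))) {..s}"
proof
  fix G :: forest
  let ?m = "length G"
  have "fsum (\<lambda>i. fmul (qq a i) (qq b (s - i))) {..s} G
      = (\<Sum>j\<le>?m. \<Sum>i\<le>s. qq a i (take j G) * qq b (s - i) (drop j G))"
    by (simp add: fsum_def fmul_def sum.swap[where A="{..s}"])
  also have "\<dots> = (\<Sum>j\<le>?m. if fw G = s then of_nat ((j + a) choose j) * of_nat ((?m - j + b) choose (?m - j)) else 0)"
  proof (rule sum.cong[OF refl])
    fix j assume j: "j \<in> {..?m}"
    have sp: "fw (take j G) + fw (drop j G) = fw G" by (metis append_take_drop_id fw_append)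
    show "(\<Sum>i\<le>s. qq a i (take j G) * qq b (s - i) (drop j G))
        = (if fw G = s then of_nat ((j + a) choose j) * of_nat ((?m - j + b) choose (?m - j)) else 0)"
    proof (cases "fw G = s")
      case True
      have "(\<Sum>i\<le>s. qq a i (take j G) * qq b (s - i) (drop j G))
          = (\<Sum>i\<le>s. if i = fw (take j G) then qq a i (take j G) * qq b (s - i) (drop j G) else 0)"
        by (rule sum.cong) (auto simp: qq_def)
      also have "\<dots> = qq a (fw (take j G)) (take j G) * qq b (s - fw (take j G)) (drop j G)"
        using sp True by (simp add: sum.delta)
      also have "\<dots> = of_nat ((j + a) choose j) * of_nat ((?m - j + b) choose (?m - j))"
      proof -
        have "s - fw (take j G) = fw (drop j G)" using sp True by simp
        then show ?thesis using j by (simp add: qq_def min_def)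
      qed
      finally show ?thesis using True by simp
    next
      case False
      have "\<forall>i\<in>{..s}. qq a i (take j G) * qq b (s - i) (drop j G) = 0"
        using sp False by (auto simp: qq_def)
      then have "(\<Sum>i\<le>s. qq a i (take j G) * qq b (s - i) (drop j G)) = 0" by (rule sum.neutral)
      then show ?thesis using False by simp
    qed
  qed
  also have "\<dots> = qq (a + b + 1) s G"
  proof (cases "fw G = s")
    case True
    have "(\<Sum>j\<le>?m. of_nat ((j + a) choose j) * of_nat ((?m - j + b) choose (?m - j)) :: rat)
       = of_nat ((?m + a + b + 1) choose ?m)"
      by (simp only: of_nat_mult[symmetric] of_nat_sum[symmetric] vdm)
    then show ?thesis using True by (simp add: qq_def add.assoc)
  qed (simp add: qq_def)
  finally show "qq (a + b + 1) s G = fsum (\<lambda>i. fmul (qq a i) (qq b (s - i))) {..s} G" by simp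
qed

lemma Hs_qq: "qq a s \<in> Hs"
proof (induction a arbitrary: s)
  case 0 then show ?case by (simp add: qq0 Hs_u)
next
  case (Suc a)
  have "qq (Suc a) s = fsum (\<lambda>i. fmul (qq 0 i) (qq a (s - i))) {..s}"
    using qconv[of 0 a s] by simp
  then show ?case using Suc by (auto simp: qq0 Hs_u intro!: Hs_fsum Hs.mul)
qed

lemma qq_1_0: "qq 1 0 = fone" by (simp add: qq_def fone_def fun_eq_iff)

lemma z_qq: assumes "n \<ge> 1" shows "z n = qq 1 n"
proof -
  have "qq 1 n = fsum (\<lambda>i. fmul (u i) (u (n - i))) {..n}"
    using qconv[of 0 0 n] by (simp add: qq0)
  also have "{..n} = insert 0 (insert n {1..n-1})" using assms by auto
  also have "fsum (\<lambda>i. fmul (u i) (u (n - i))) (insert 0 (insert n {1..n-1}))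
      = fadd (u n) (fadd (u n) (fsum (\<lambda>i. fmul (u i) (u (n - i))) {1..n-1}))"
  proof -
    have "fmul (u n) (u (n - n)) = u n" by (simp add: u0)
    then show ?thesis using assms by (simp add: fsum_insert u0)
  qed
  also have "\<dots> = z n"
    by (simp add: z_def fadd_def smul_def fun_eq_iff)
  finally show ?thesis by simp
qed

section \<open>Homogeneity\<close>

lemma homog_fmul: "homogeneous n a \<Longrightarrow> homogeneous m b \<Longrightarrow> homogeneous (n + m) (fmul a b)"
  unfolding homogeneous_def
proof (intro allI impI)
  fix F assume ha: "\<forall>F. a F \<noteq> 0 \<longrightarrow> fw F = n" and hb: "\<forall>F. b F \<noteq> 0 \<longrightarrow> fw F = m"
    and "fmul a b F \<noteq> 0"
  then obtain i where "a (take i F) * b (drop i F) \<noteq> 0"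
    by (auto simp: fmul_def elim!: sum.not_neutral_contains_not_neutral)
  then have "fw (take i F) = n" "fw (drop i F) = m" using ha hb by auto
  then show "fw F = n + m" by (metis append_take_drop_id fw_append)
qed

lemma homog_fadd: "homogeneous n a \<Longrightarrow> homogeneous n b \<Longrightarrow> homogeneous n (fadd a b)"
  by (simp add: homogeneous_def fadd_def) (metis add.right_neutral)
lemma homog_smul: "homogeneous n a \<Longrightarrow> homogeneous n (smul c a)"
  by (auto simp: homogeneous_def smul_def)
lemma homog_fsum: "(\<And>k. k \<in> K \<Longrightarrow> homogeneous n (f k)) \<Longrightarrow> homogeneous n (fsum f K)"
  by (auto simp: homogeneous_def fsum_def elim!: sum.not_neutral_contains_not_neutral)
lemma homog_u: "homogeneous n (u n)" by (simp add: homogeneous_def u_def)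
lemma homog_qq: "homogeneous s (qq a s)" by (simp add: homogeneous_def qq_def)
lemma homog_z: "n \<ge> 1 \<Longrightarrow> homogeneous n (z n)" by (simp add: z_qq homog_qq)
lemma Hs_z: "n \<ge> 1 \<Longrightarrow> z n \<in> Hs" by (simp add: z_qq Hs_qq)

declare w.simps[simp del]

lemma w_alt: "w n = fadd (smul (1/2) (u n)) (smul (-1/2) (fsum (\<lambda>i. fmul (w i) (w (n - i))) {1..<n}))"
  by (subst w.simps) (simp add: fadd_def smul_def fsum_def fun_eq_iff)


lemma w_props: "w n \<in> Hs \<and> homogeneous n (w n)"
proof (induction n rule: less_induct)
  case (less n)
  have "fsum (\<lambda>i. fmul (w i) (w (n - i))) {1..<n} \<in> Hs"
    using less by (auto intro!: Hs_fsum Hs.mul)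
  moreover have "homogeneous n (fsum (\<lambda>i. fmul (w i) (w (n - i))) {1..<n})"
  proof (rule homog_fsum)
    fix i assume "i \<in> {1..<n}"
    then show "homogeneous n (fmul (w i) (w (n - i)))"
      using less[of i] less[of "n - i"] homog_fmul[of i "w i" "n - i" "w (n - i)"] by auto
  qed
  ultimately show ?case
    by (subst (1 2) w_alt) (auto intro!: Hs.intros Hs_u homog_fadd homog_smul homog_u)
qed



lemma linM_fadd: "linM M (fadd a b) = fadd (linM M a) (linM M b)"
  by (simp add: linM_def fadd_def fun_eq_iff sum.distrib distrib_right)
lemma linM_smul: "linM M (smul c a) = smul c (linM M a)"
  by (simp add: linM_def smul_def fun_eq_iff sum_distrib_left mult.assoc)
lemma linM_fsum: "linM M (fsum f K) = fsum (\<lambda>k. linM M (f k)) K"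
  by (simp add: linM_def fsum_def fun_eq_iff sum_distrib_right sum.swap[where A=K])
lemma linM_fone: "M [] = fone \<Longrightarrow> linM M fone = fone"
proof
  fix G assume M0: "M [] = fone"
  have "linM M fone G = (\<Sum>F\<in>W (fw G). if F = [] then M F G else 0)"
    unfolding linM_def fone_def by (rule sum.cong) auto
  also have "\<dots> = fone G" by (simp add: sum.delta M0) (auto simp: W_def fone_def)
  finally show "linM M fone G = fone G" .
qed
lemma linM_homog: "homogeneous n x \<Longrightarrow> homogeneous n (linM M x)"
  unfolding homogeneous_def linM_def
  by (auto simp: W_def elim!: sum.not_neutral_contains_not_neutral)
lemma linM_counit: "M [] = fone \<Longrightarrow> linM M x [] = x []"
proof -
  assume "M [] = fone"
  moreover have "W 0 = {[]}" by (auto simp: W_def)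
  ultimately show ?thesis by (simp add: linM_def fone_def)
qed

function vv :: "(nat \<Rightarrow> alg) \<Rightarrow> nat \<Rightarrow> alg" where
  "vv y n = (\<lambda>F. y n F - (\<Sum>k\<in>{1..<n}. fmul (vv y k) (y (n - k)) F))"
  by auto
termination
  by (relation "measure (\<lambda>(y, n). n)") auto

declare vv.simps[simp del]

lemma vv_alt: "vv y n = fadd (y n) (smul (-1) (fsum (\<lambda>k. fmul (vv y k) (y (n - k))) {1..<n}))"
  by (subst vv.simps) (simp add: fadd_def smul_def fsum_def fun_eq_iff)

definition gg :: "(nat \<Rightarrow> alg) \<Rightarrow> ptree \<Rightarrow> alg" where
  "gg y t = smul (1 / of_nat (card (W (tw t - 1)))) (vv y (tw t))"

definition MM :: "(nat \<Rightarrow> alg) \<Rightarrow> forest \<Rightarrow> alg" where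
  "MM y F = foldr (\<lambda>t acc. fmul (gg y t) acc) F fone"

lemma MM_Nil: "MM y [] = fone" by (simp add: MM_def)
lemma MM_append: "MM y (F1 @ F2) = fmul (MM y F1) (MM y F2)"
  by (induction F1) (simp_all add: MM_def fmul_assoc)
lemma MM_single: "MM y [t] = gg y t" by (simp add: MM_def)

lemma homog_fone: "homogeneous 0 fone" by (simp add: homogeneous_def fone_def)

lemma vv_homog:
  assumes hy: "\<And>n. homogeneous n (y n)"
  shows "homogeneous n (vv y n)"
proof (induction n rule: less_induct)
  case (less n)
  have "homogeneous n (fsum (\<lambda>k. fmul (vv y k) (y (n - k))) {1..<n})"
  proof (rule homog_fsum)
    fix k assume "k \<in> {1..<n}"
    then show "homogeneous n (fmul (vv y k) (y (n - k)))"
      using homog_fmul[OF less[of k] hy[of "n - k"]] by simp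
  qed
  then show ?case by (subst vv_alt) (auto intro!: homog_fadd homog_smul hy)
qed

lemma MM_homog:
  assumes hy: "\<And>n. homogeneous n (y n)"
  shows "homogeneous (fw F) (MM y F)"
proof (induction F)
  case Nil then show ?case by (simp add: MM_Nil homog_fone)
next
  case (Cons t F)
  have "homogeneous (tw t) (gg y t)" unfolding gg_def by (rule homog_smul[OF vv_homog[OF hy]])
  then show ?case using homog_fmul[OF _ Cons] by (simp add: MM_def)
qed

definition Tk :: "nat \<Rightarrow> alg" where
  "Tk k = (\<lambda>F. if length F = 1 \<and> fw F = k then 1 else 0)"

lemma W_nonempty: "W m \<noteq> {}"
proof -
  have "fw (replicate m (Node [])) = m" by (induction m) auto
  then show ?thesis by (auto simp: W_def)
qed

lemma linM_Tk:
  assumes hy: "\<And>n. homogeneous n (y n)" and k: "k \<ge> 1"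
  shows "linM (MM y) (Tk k) = vv y k"
proof
  fix G
  have "linM (MM y) (Tk k) G = (\<Sum>F\<in>W (fw G). if length F = 1 then (if fw F = k then MM y F G else 0) else 0)"
    unfolding linM_def Tk_def by (rule sum.cong) auto
  also have "\<dots> = (if fw G = 0 then 0 else \<Sum>ts\<in>W (fw G - 1). if fw [Node ts] = k then MM y [Node ts] G else 0)"
    by (rule sum_W_single)
  also have "\<dots> = vv y k G"
  proof (cases "fw G = k")
    case True
    have c: "card (W (k - 1)) \<noteq> 0" using W_nonempty by (simp add: card_eq_0_iff)
    have "(\<Sum>ts\<in>W (fw G - 1). if fw [Node ts] = k then MM y [Node ts] G else 0)
        = (\<Sum>ts\<in>W (k - 1). (1 / of_nat (card (W (k - 1)))) * vv y k G)"
      using True k by (intro sum.cong) (auto simp: W_def MM_single gg_def smul_def)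
    also have "\<dots> = vv y k G" using c by simp
    finally show ?thesis using True k by simp
  next
    case False
    have "vv y k G = 0" using vv_homog[OF hy, of k] False by (auto simp: homogeneous_def)
    moreover have "\<forall>ts\<in>W (fw G - 1). (if fw [Node ts] = k then MM y [Node ts] G else 0) = 0"
      using MM_homog[OF hy, of "[Node ts]" for ts] False
      by (auto simp: homogeneous_def)
    ultimately show ?thesis by simp
  qed
  finally show "linM (MM y) (Tk k) G = vv y k G" .
qed

lemma u_split:
  assumes n: "n \<ge> 1"
  shows "u n = fsum (\<lambda>k. fmul (Tk k) (u (n - k))) {1..n}"
proof
  fix G
  have "fsum (\<lambda>k. fmul (Tk k) (u (n - k))) {1..n} G
      = (\<Sum>k\<in>{1..n}. if G \<noteq> [] \<and> tw (hd G) = k \<and> fw (tl G) = n - k then 1 else 0)"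
  proof (unfold fsum_def, rule sum.cong[OF refl])
    fix k assume "k \<in> {1..n}"
    have "fmul (Tk k) (u (n - k)) G = (\<Sum>i\<le>length G. if i = 1 then (if G \<noteq> [] \<and> tw (hd G) = k \<and> fw (tl G) = n - k then 1 else 0) else 0)"
      unfolding fmul_def
    proof (rule sum.cong[OF refl])
      fix i assume i: "i \<in> {..length G}"
      show "Tk k (take i G) * u (n - k) (drop i G) = (if i = 1 then (if G \<noteq> [] \<and> tw (hd G) = k \<and> fw (tl G) = n - k then 1 else 0) else 0)"
      proof (cases G)
        case Nil then show ?thesis using i by (simp add: Tk_def)
      next
        case (Cons t G')
        show ?thesis
        proof (cases i)
          case 0 then show ?thesis by (simp add: Tk_def)
        next
          case (Suc j)
          then show ?thesis using Cons i by (cases j) (auto simp: Tk_def u_def)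
        qed
      qed
    qed
    also have "\<dots> = (if G \<noteq> [] \<and> tw (hd G) = k \<and> fw (tl G) = n - k then 1 else 0)"
      by (cases G) (simp_all only: sum.delta[OF finite_atMost], simp_all)
    finally show "fmul (Tk k) (u (n - k)) G = \<dots>" .
  qed
  also have "\<dots> = u n G"
  proof (cases G)
    case Nil then show ?thesis using n by (simp add: u_def)
  next
    case (Cons t G')
    have "(\<Sum>k\<in>{1..n}. if G \<noteq> [] \<and> tw (hd G) = k \<and> fw (tl G) = n - k then 1 else 0 :: rat)
       = (\<Sum>k\<in>{1..n}. if k = tw t then (if fw G' = n - tw t then 1 else 0) else 0)"
      by (rule sum.cong) (auto simp: Cons)
    also have "\<dots> = (if tw t \<le> n \<and> fw G' = n - tw t then 1 else 0)"
      using tw_pos[of t] by (simp add: sum.delta)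
    also have "\<dots> = u n G" by (auto simp: u_def Cons)
    finally show ?thesis .
  qed
  finally show "u n G = fsum (\<lambda>k. fmul (Tk k) (u (n - k))) {1..n} G" by simp
qed

lemma fsum_cong: "(\<And>k. k \<in> K \<Longrightarrow> f k = g k) \<Longrightarrow> fsum f K = fsum g K"
  by (simp add: fsum_def fun_eq_iff)

definition yy :: "(nat \<Rightarrow> alg) \<Rightarrow> nat \<Rightarrow> alg" where
  "yy y n = (if n = 0 then fone else y n)"

lemma linM_u:
  assumes hy: "\<And>n. n \<ge> 1 \<Longrightarrow> homogeneous n (y n)"
  shows "linM (MM (yy y)) (u n) = yy y n"
proof (induction n rule: less_induct)
  case (less n)
  have hyy: "\<And>n. homogeneous n (yy y n)" using hy homog_fone by (simp add: yy_def)
  let ?M = "MM (yy y)"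
  have mM: "\<And>a b. linM ?M (fmul a b) = fmul (linM ?M a) (linM ?M b)"
    by (rule linM_mult) (use MM_homog[OF hyy] in \<open>auto simp: homogeneous_def MM_append\<close>)
  show ?case
  proof (cases "n = 0")
    case True then show ?thesis by (simp add: u0 yy_def linM_fone MM_Nil)
  next
    case False
    then have n: "n \<ge> 1" by simp
    have "linM ?M (u n) = fsum (\<lambda>k. fmul (vv (yy y) k) (yy y (n - k))) {1..n}"
      unfolding u_split[OF n] linM_fsum mM
      by (rule fsum_cong) (auto simp: linM_Tk[OF hyy] less)
    also have "\<dots> = fadd (fmul (vv (yy y) n) (yy y (n - n))) (fsum (\<lambda>k. fmul (vv (yy y) k) (yy y (n - k))) {1..<n})"
    proof -
      have "{1..n} = insert n {1..<n}" using n by auto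
      then show ?thesis by (simp add: fsum_insert)
    qed
    also have "\<dots> = yy y n"
    proof -
      have V: "vv (yy y) n = fadd (yy y n) (smul (-1) (fsum (\<lambda>k. fmul (vv (yy y) k) (yy y (n - k))) {1..<n}))"
        by (rule vv_alt)
      have Y0: "yy y (n - n) = fone" by (simp add: yy_def)
      show ?thesis by (simp only: V Y0 fmul_fone_right) (simp add: fadd_def smul_def fun_eq_iff)
    qed
    finally show ?thesis .
  qed
qed

lemma morph_exists:
  assumes hy: "\<And>n. n \<ge> 1 \<Longrightarrow> homogeneous n (y n)" and Hy: "\<And>n. n \<ge> 1 \<Longrightarrow> y n \<in> Hs"
  shows "\<exists>M. (\<forall>F G. M F G \<noteq> 0 \<longrightarrow> fw F = fw G) \<and> (\<forall>F1 F2. M (F1 @ F2) = fmul (M F1) (M F2))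
     \<and> M [] = fone \<and> (\<forall>n\<ge>1. linM M (u n) = y n) \<and> (\<forall>x\<in>Hs. linM M x \<in> Hs)"
proof (intro exI conjI allI impI ballI)
  let ?M = "MM (yy y)"
  have hyy: "\<And>n. homogeneous n (yy y n)" using hy homog_fone by (simp add: yy_def)
  show w: "\<And>F G. ?M F G \<noteq> 0 \<Longrightarrow> fw F = fw G"
    using MM_homog[OF hyy] by (auto simp: homogeneous_def)
  show m: "\<And>F1 F2. ?M (F1 @ F2) = fmul (?M F1) (?M F2)" by (rule MM_append)
  show M0: "?M [] = fone" by (rule MM_Nil)
  show "\<And>n. n \<ge> 1 \<Longrightarrow> linM ?M (u n) = y n" using linM_u[OF hy] by (simp add: yy_def)
  fix x assume "x \<in> Hs"
  then show "linM ?M x \<in> Hs"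
  proof (induction rule: Hs.induct)
    case (gen n)
    have "yy y n = y n" using gen by (simp add: yy_def)
    then show ?case using linM_u[OF hy, of n] Hy[of n] gen by simp
  next
    case one then show ?case by (simp add: linM_fone[where M="?M", OF M0] Hs.one)
  next
    case (add a b) then show ?case by (simp add: linM_fadd Hs.add)
  next
    case (smul a c) then show ?case by (simp add: linM_smul Hs.smul)
  next
    case (mul a b) then show ?case by (simp add: linM_mult[OF w m] Hs.mul)
  qed
qed



lemma linK_smul: "linK K (smul c a) = (\<lambda>x. c * linK K a x)"
  by (simp add: linK_def smul_def fun_eq_iff sum_distrib_left mult.assoc)

lemma linK_restrict:
  "linK K (\<lambda>F. if fw F = n then a F else 0) (G, H) = (if fw G + fw H = n then linK K a (G, H) else 0)"
  by (auto simp: linK_def W_def intro!: sum.neutral)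

lemma linK_u: "linK K (u n) (G, H) = (if fw G + fw H = n then linK K ones (G, H) else 0)"
proof -
  have "u n = (\<lambda>F. if fw F = n then ones F else 0)" by (simp add: u_def ones_def fun_eq_iff)
  then show ?thesis by (simp only: linK_restrict)
qed

lemma tens_sum_Nil: "tens_sum [] = (\<lambda>x. 0)" by (simp add: tens_sum_def fun_eq_iff)
lemma tens_sum_Cons: "tens_sum ((a, b) # ps) = (\<lambda>x. tens a b x + tens_sum ps x)"
  by (simp add: tens_sum_def tens_def fun_eq_iff)
lemma tens_sum_append: "tens_sum (ps @ qs) = (\<lambda>x. tens_sum ps x + tens_sum qs x)"
  by (simp add: tens_sum_def fun_eq_iff)
lemma tens_sum_smul: "tens_sum (map (\<lambda>(a, b). (smul c a, b)) ps) = (\<lambda>x. c * tens_sum ps x)"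
  by (induction ps) (auto simp: tens_sum_Nil tens_sum_Cons tens_def smul_def distrib_left)

lemma mul2_add_left: "mul2 (\<lambda>x. A x + B x) C = (\<lambda>x. mul2 A C x + mul2 B C x)"
  by (simp add: mul2_def fun_eq_iff case_prod_unfold sum.distrib distrib_right)
lemma mul2_add_right: "mul2 C (\<lambda>x. A x + B x) = (\<lambda>x. mul2 C A x + mul2 C B x)"
  by (simp add: mul2_def fun_eq_iff case_prod_unfold sum.distrib distrib_left)
lemma mul2_zero_left: "mul2 (\<lambda>x. 0) C = (\<lambda>x. 0)"
  by (simp add: mul2_def fun_eq_iff case_prod_unfold)
lemma mul2_zero_right: "mul2 C (\<lambda>x. 0) = (\<lambda>x. 0)"
  by (simp add: mul2_def fun_eq_iff case_prod_unfold)
lemma mul2_tens: "mul2 (tens a1 b1) (tens a2 b2) = tens (fmul a1 a2) (fmul b1 b2)"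
proof (rule ext, clarify)
  fix G H :: forest
  have "mul2 (tens a1 b1) (tens a2 b2) (G, H)
     = (\<Sum>(i, j)\<in>{..length G} \<times> {..length H}. (a1 (take i G) * a2 (drop i G)) * (b1 (take j H) * b2 (drop j H)))"
    by (simp add: mul2_def tens_def SP_def mult_ac)
  also have "\<dots> = fmul a1 a2 G * fmul b1 b2 H"
    by (simp add: fmul_def sum_product sum.cartesian_product)
  finally show "mul2 (tens a1 b1) (tens a2 b2) (G, H) = tens (fmul a1 a2) (fmul b1 b2) (G, H)"
    by (simp add: tens_def)
qed

definition pmul :: "(alg \<times> alg) list \<Rightarrow> (alg \<times> alg) list \<Rightarrow> (alg \<times> alg) list" where
  "pmul ps qs = concat (map (\<lambda>(a1, b1). map (\<lambda>(a2, b2). (fmul a1 a2, fmul b1 b2)) qs) ps)"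

lemma mul2_tens_sum: "mul2 (tens_sum ps) (tens_sum qs) = tens_sum (pmul ps qs)"
proof (induction ps)
  case Nil then show ?case by (simp add: pmul_def tens_sum_Nil mul2_zero_left)
next
  case (Cons p ps)
  obtain a1 b1 where p: "p = (a1, b1)" by (cases p)
  have "mul2 (tens a1 b1) (tens_sum qs) = tens_sum (map (\<lambda>(a2, b2). (fmul a1 a2, fmul b1 b2)) qs)"
  proof (induction qs)
    case Nil then show ?case by (simp add: tens_sum_Nil mul2_zero_right)
  next
    case (Cons q qs)
    obtain a2 b2 where q: "q = (a2, b2)" by (cases q)
    show ?case using Cons by (simp add: q tens_sum_Cons mul2_add_right mul2_tens)
  qed
  then show ?case using Cons
    by (simp add: p pmul_def tens_sum_Cons tens_sum_append mul2_add_left)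
qed

lemma pmul_map: "(\<And>a b. f (fmul a b) = fmul (f a) (f b)) \<Longrightarrow>
   map (\<lambda>(a, b). (f a, f b)) (pmul ps qs) = pmul (map (\<lambda>(a, b). (f a, f b)) ps) (map (\<lambda>(a, b). (f a, f b)) qs)"
  by (simp add: pmul_def map_concat case_prod_unfold comp_def)

lemma set_pmul: "set ps \<subseteq> Hs \<times> Hs \<Longrightarrow> set qs \<subseteq> Hs \<times> Hs \<Longrightarrow> set (pmul ps qs) \<subseteq> Hs \<times> Hs"
  by (auto simp: pmul_def intro!: Hs.mul)

lemma tens_sum_upt: "tens_sum (map f [0..<Suc n]) (G, H) = (\<Sum>k\<le>n. fst (f k) G * snd (f k) H)"
proof -
  have "tens_sum (map f [0..<Suc n]) (G, H) = sum_list (map (\<lambda>k. fst (f k) G * snd (f k) H) [0..<Suc n])"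
    by (simp add: tens_sum_def case_prod_unfold comp_def)
  also have "\<dots> = (\<Sum>k\<in>set [0..<Suc n]. fst (f k) G * snd (f k) H)"
    by (rule sum_set_upt_conv_sum_list_nat[symmetric])
  also have "set [0..<Suc n] = {..n}" by auto
  finally show ?thesis .
qed

lemma sum_pick: "(\<Sum>k\<le>n. (if fw G = n - k then A k else 0) * (if fw H = k then B k else 0))
   = (if fw G + fw H = n then A (fw H) * B (fw H) else (0 :: rat))"
proof -
  have "(\<Sum>k\<le>n. (if fw G = n - k then A k else 0) * (if fw H = k then B k else 0))
      = (\<Sum>k\<le>n. if k = fw H then (if fw G = n - k then A k * B k else 0) else 0)"
    by (rule sum.cong) auto
  also have "\<dots> = (if fw G + fw H = n then A (fw H) * B (fw H) else 0)"
    by (auto simp: sum.delta)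
  finally show ?thesis .
qed



definition good :: "(forest \<Rightarrow> alg) \<Rightarrow> bool" where
  "good M \<longleftrightarrow> (\<forall>F G. M F G \<noteq> 0 \<longrightarrow> fw F = fw G) \<and> (\<forall>F1 F2. M (F1 @ F2) = fmul (M F1) (M F2)) \<and> M [] = fone"

lemma good_mult: "good M \<Longrightarrow> linM M (fmul a b) = fmul (linM M a) (linM M b)"
  unfolding good_def by (rule linM_mult) auto
lemma good_fone: "good M \<Longrightarrow> linM M fone = fone"
  unfolding good_def by (rule linM_fone) auto

lemma qq_Phi0:
  assumes g: "good M" and Mu: "\<forall>n\<ge>1. linM M (u n) = z n"
  shows "linM M (qq 0 s) = qq 1 s"
  proof (cases "s = 0")
    case True then show ?thesis using qq_1_0 by (simp add: qq0 u0 good_fone[OF g])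
  next
    case False then show ?thesis using Mu z_qq[of s] by (simp add: qq0)
  qed

lemma qq_Phi:
  assumes g: "good M" and Mu: "\<forall>n\<ge>1. linM M (u n) = z n"
  shows "linM M (qq a s) = qq (2 * a + 1) s"
proof (induction a arbitrary: s)
  case 0
  show ?case using qq_Phi0[OF g Mu] by simp
next
  case (Suc a)
  have "qq (Suc a) s = fsum (\<lambda>i. fmul (qq 0 i) (qq a (s - i))) {..s}"
    using qconv[of 0 a s] by simp
  then have "linM M (qq (Suc a) s) = fsum (\<lambda>i. fmul (qq 1 i) (qq (2 * a + 1) (s - i))) {..s}"
    using Suc qq_Phi0[OF g Mu] by (simp add: linM_fsum good_mult[OF g])
  also have "\<dots> = qq (1 + (2 * a + 1) + 1) s" by (rule qconv[symmetric])
  finally show ?case by simp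
qed

lemma Phi_u:
  assumes g: "good M" and Mu: "\<forall>n\<ge>1. linM M (u n) = z n"
  shows "linM M (u k) = qq 1 k"
  using qq_Phi[OF g Mu, of 0 k] by (simp add: qq0)

lemma ones_sq: "fmul ones ones F = of_nat ((length F + 1) choose length F)"
  by (simp add: fmul_def ones_def)

lemma mul2_XX: "mul2 X X (G, H) = of_nat ((length H + 1) * ((length G + 2 * fw H + 1) choose length G))"
proof -
  have "mul2 X X (G, H) = (\<Sum>i\<le>length G. \<Sum>j\<le>length H. X (take i G, take j H) * X (drop i G, drop j H))"
    by (simp add: mul2_def SP_def sum.cartesian_product)
  also have "\<dots> = (\<Sum>j\<le>length H. \<Sum>i\<le>length G. X (take i G, take j H) * X (drop i G, drop j H))"
    by (rule sum.swap)
  also have "\<dots> = (\<Sum>j\<le>length H. \<Sum>i\<le>length G.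
      of_nat ((i + 2 * fw (take j H)) choose i) * of_nat ((length G - i + 2 * fw (drop j H)) choose (length G - i)))"
    by (intro sum.cong refl) (auto simp: X_closed min_def)
  also have "\<dots> = (\<Sum>j\<le>length H. of_nat ((length G + 2 * fw H + 1) choose length G))"
  proof (rule sum.cong[OF refl])
    fix j
    have sp: "fw (take j H) + fw (drop j H) = fw H" by (metis append_take_drop_id fw_append)
    show "(\<Sum>i\<le>length G. of_nat ((i + 2 * fw (take j H)) choose i) * of_nat ((length G - i + 2 * fw (drop j H)) choose (length G - i)))
        = (of_nat ((length G + 2 * fw H + 1) choose length G) :: rat)"
      by (simp only: of_nat_mult[symmetric] of_nat_sum[symmetric] vdm)
         (simp add: sp[symmetric] algebra_simps)
  qed
  also have "\<dots> = of_nat ((length H + 1) * ((length G + 2 * fw H + 1) choose length G))"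
    by (simp add: algebra_simps)
  finally show ?thesis .
qed

lemma gen_case:
  assumes g: "good M" and Mu: "\<forall>n\<ge>1. linM M (u n) = z n" and n: "n \<ge> 1"
  shows "\<exists>ps. set ps \<subseteq> Hs \<times> Hs \<and> copFr (u n) = tens_sum ps \<and>
           cop (linM M (u n)) = tens_sum (map (\<lambda>(a, b). (linM M a, linM M b)) ps)"
proof (intro exI conjI)
  let ?ps = "map (\<lambda>k. (qq k (n - k), u k)) [0..<Suc n]"
  show "set ?ps \<subseteq> Hs \<times> Hs" by (auto simp: Hs_qq Hs_u)
  show "copFr (u n) = tens_sum ?ps"
  proof (rule ext, clarify)
    fix G H :: forest
    have "copFr (u n) (G, H) = (if fw G + fw H = n then XF (G, H) else 0)"
      by (simp add: copFr_linK[OF fsupp_Hs[OF Hs_u]] linK_u XF_def)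
    also have "\<dots> = (\<Sum>k\<le>n. (if fw G = n - k then of_nat ((length G + k) choose length G) else 0) * (if fw H = k then 1 else 0))"
      by (simp only: sum_pick XF_closed) simp
    also have "\<dots> = tens_sum ?ps (G, H)"
      by (simp only: tens_sum_upt) (simp add: qq_def u_def)
    finally show "copFr (u n) (G, H) = tens_sum ?ps (G, H)" .
  qed
  show "cop (linM M (u n)) = tens_sum (map (\<lambda>(a, b). (linM M a, linM M b)) ?ps)"
  proof (rule ext, clarify)
    fix G H :: forest
    have q1: "qq 1 n = (\<lambda>F. if fw F = n then fmul ones ones F else 0)"
      by (simp add: qq_def ones_sq fun_eq_iff)
    have "cop (linM M (u n)) (G, H) = linK (KF cuts) (qq 1 n) (G, H)"
      by (simp add: Phi_u[OF g Mu] cop_linK[OF fsupp_Hs[OF Hs_qq]])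
    also have "\<dots> = (if fw G + fw H = n then mul2 X X (G, H) else 0)"
      by (simp only: q1 linK_restrict linK_mult[OF KF_cuts_weight] X_def)
    also have "\<dots> = (\<Sum>k\<le>n. (if fw G = n - k then of_nat ((length G + (2 * k + 1)) choose length G) else 0)
                      * (if fw H = k then of_nat ((length H + 1) choose length H) else 0))"
      by (simp only: sum_pick mul2_XX) (simp add: algebra_simps)
    also have "\<dots> = tens_sum (map (\<lambda>(a, b). (linM M a, linM M b)) ?ps) (G, H)"
      by (simp only: map_map tens_sum_upt comp_def prod.case fst_conv snd_conv qq_Phi[OF g Mu] Phi_u[OF g Mu])
         (simp add: qq_def, rule sum.cong[OF refl], simp)
    finally show "cop (linM M (u n)) (G, H) = tens_sum (map (\<lambda>(a, b). (linM M a, linM M b)) ?ps) (G, H)" .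
  qed
qed



lemma cop_all:
  assumes g: "good M" and Mu: "\<forall>n\<ge>1. linM M (u n) = z n" and MH: "\<forall>x\<in>Hs. linM M x \<in> Hs"
    and x: "x \<in> Hs"
  shows "\<exists>ps. set ps \<subseteq> Hs \<times> Hs \<and> copFr x = tens_sum ps \<and>
           cop (linM M x) = tens_sum (map (\<lambda>(a, b). (linM M a, linM M b)) ps)"
  using x
proof (induction rule: Hs.induct)
  case (gen n) then show ?case using gen_case[OF g Mu] by simp
next
  case one
  show ?case
  proof (intro exI conjI)
    have t: "tens_sum [(fone, fone)] = linK (KF k) fone" for k
    proof (rule ext, clarify)
      fix G H show "tens_sum [(fone, fone)] (G, H) = linK (KF k) fone (G, H)"
        by (simp add: tens_sum_Cons tens_sum_Nil tens_def linK_fone) (simp add: fone_def)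
    qed
    show "set [(fone, fone)] \<subseteq> Hs \<times> Hs" by (simp add: Hs.one)
    show "copFr fone = tens_sum [(fone, fone)]"
      by (simp add: copFr_linK[OF fsupp_Hs[OF Hs.one]] t[symmetric])
    show "cop (linM M fone) = tens_sum (map (\<lambda>(a, b). (linM M a, linM M b)) [(fone, fone)])"
      by (simp add: good_fone[OF g] cop_linK[OF fsupp_Hs[OF Hs.one]] t[symmetric])
  qed
next
  case (add a b)
  from add.IH obtain psa psb where
    A: "set psa \<subseteq> Hs \<times> Hs" "copFr a = tens_sum psa" "cop (linM M a) = tens_sum (map (\<lambda>(a, b). (linM M a, linM M b)) psa)" and
    B: "set psb \<subseteq> Hs \<times> Hs" "copFr b = tens_sum psb" "cop (linM M b) = tens_sum (map (\<lambda>(a, b). (linM M a, linM M b)) psb)"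
    by blast
  have Ma: "linM M a \<in> Hs" "linM M b \<in> Hs" using MH add.hyps by auto
  show ?case
  proof (intro exI conjI)
    show "set (psa @ psb) \<subseteq> Hs \<times> Hs" using A B by auto
    show "copFr (fadd a b) = tens_sum (psa @ psb)"
      using A B add.hyps
      by (simp add: copFr_linK fsupp_Hs Hs.add linK_fadd tens_sum_append)
    show "cop (linM M (fadd a b)) = tens_sum (map (\<lambda>(a, b). (linM M a, linM M b)) (psa @ psb))"
      using A B Ma
      by (simp add: linM_fadd cop_linK fsupp_Hs Hs.add linK_fadd tens_sum_append)
  qed
next
  case (smul a c)
  from smul.IH obtain psa where
    A: "set psa \<subseteq> Hs \<times> Hs" "copFr a = tens_sum psa" "cop (linM M a) = tens_sum (map (\<lambda>(a, b). (linM M a, linM M b)) psa)"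
    by blast
  have Ma: "linM M a \<in> Hs" using MH smul.hyps by auto
  have mm: "map (\<lambda>(a, b). (linM M a, linM M b)) (map (\<lambda>(a, b). (smul c a, b)) psa)
      = map (\<lambda>(a, b). (smul c a, b)) (map (\<lambda>(a, b). (linM M a, linM M b)) psa)"
    by (simp add: linM_smul case_prod_unfold)
  show ?case
  proof (intro exI conjI)
    show "set (map (\<lambda>(a, b). (smul c a, b)) psa) \<subseteq> Hs \<times> Hs" using A by (auto intro: Hs.smul)
    show "copFr (smul c a) = tens_sum (map (\<lambda>(a, b). (smul c a, b)) psa)"
      using A smul.hyps
      by (simp add: copFr_linK fsupp_Hs Hs.smul linK_smul tens_sum_smul)
    show "cop (linM M (smul c a)) = tens_sum (map (\<lambda>(a, b). (linM M a, linM M b)) (map (\<lambda>(a, b). (smul c a, b)) psa))"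
      using A Ma
      by (simp only: mm tens_sum_smul linM_smul cop_linK[OF fsupp_Hs[OF Hs.smul[OF Ma]]] cop_linK[OF fsupp_Hs[OF Ma]]
          linK_smul)
  qed
next
  case (mul a b)
  from mul.IH obtain psa psb where
    A: "set psa \<subseteq> Hs \<times> Hs" "copFr a = tens_sum psa" "cop (linM M a) = tens_sum (map (\<lambda>(a, b). (linM M a, linM M b)) psa)" and
    B: "set psb \<subseteq> Hs \<times> Hs" "copFr b = tens_sum psb" "cop (linM M b) = tens_sum (map (\<lambda>(a, b). (linM M a, linM M b)) psb)"
    by blast
  have Ma: "linM M a \<in> Hs" "linM M b \<in> Hs" using MH mul.hyps by auto
  show ?case
  proof (intro exI conjI)
    show "set (pmul psa psb) \<subseteq> Hs \<times> Hs" using set_pmul[OF A(1) B(1)] .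
    show "copFr (fmul a b) = tens_sum (pmul psa psb)"
      using A B mul.hyps
      by (simp add: copFr_linK fsupp_Hs Hs.mul linK_mult[OF KF_fcuts_weight] mul2_tens_sum)
    show "cop (linM M (fmul a b)) = tens_sum (map (\<lambda>(a, b). (linM M a, linM M b)) (pmul psa psb))"
      using A B Ma
      by (simp add: good_mult[OF g] cop_linK fsupp_Hs Hs.mul linK_mult[OF KF_cuts_weight] mul2_tens_sum
          pmul_map[of "linM M", OF good_mult[OF g]])
  qed
qed



lemma good_intro: "(\<forall>F G. M F G \<noteq> 0 \<longrightarrow> fw F = fw G) \<Longrightarrow> (\<forall>F1 F2. M (F1 @ F2) = fmul (M F1) (M F2)) \<Longrightarrow> M [] = fone \<Longrightarrow> good M"
  by (simp add: good_def)

lemma Psi_z: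
  assumes g: "good M" and Mw: "\<forall>n\<ge>1. linM M (u n) = w n" and n: "n \<ge> 1"
  shows "linM M (z n) = u n"
proof -
  have "linM M (z n) = fadd (smul 2 (w n)) (fsum (\<lambda>k. fmul (w k) (w (n - k))) {1..<n})"
  proof -
    have "{1..n-1} = {1..<n}" by auto
    moreover have "fsum (\<lambda>k. linM M (fmul (u k) (u (n - k)))) {1..<n} = fsum (\<lambda>k. fmul (w k) (w (n - k))) {1..<n}"
    proof (rule fsum_cong)
      fix k assume k: "k \<in> {1..<n}"
      then have "n - k \<ge> 1" "k \<ge> 1" by auto
      then show "linM M (fmul (u k) (u (n - k))) = fmul (w k) (w (n - k))"
        using Mw by (simp add: good_mult[OF g])
    qed
    ultimately show ?thesis using n Mw
      by (simp add: z_def linM_fadd linM_smul linM_fsum)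
  qed
  also have "\<dots> = u n"
  proof -
    have W: "w n = fadd (smul (1/2) (u n)) (smul (-1/2) (fsum (\<lambda>i. fmul (w i) (w (n - i))) {1..<n}))"
      by (rule w_alt)
    show ?thesis unfolding W by (simp add: fadd_def smul_def fun_eq_iff)
  qed
  finally show ?thesis .
qed

lemma Phi_w:
  assumes g: "good M" and Mu: "\<forall>n\<ge>1. linM M (u n) = z n" and n: "n \<ge> 1"
  shows "linM M (w n) = u n"
  using n
proof (induction n rule: less_induct)
  case (less n)
  have S: "fsum (\<lambda>i. linM M (fmul (w i) (w (n - i)))) {1..<n} = fsum (\<lambda>i. fmul (u i) (u (n - i))) {1..<n}"
  proof (rule fsum_cong)
    fix k assume k: "k \<in> {1..<n}"
    then have "n - k \<ge> 1" "k \<ge> 1" "n - k < n" "k < n" by auto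
    then show "linM M (fmul (w k) (w (n - k))) = fmul (u k) (u (n - k))"
      using less.IH by (simp add: good_mult[OF g])
  qed
  have "{1..n-1} = {1..<n}" by auto
  have "linM M (w n) = fadd (smul (1/2) (linM M (u n))) (smul (-1/2) (fsum (\<lambda>i. linM M (fmul (w i) (w (n - i)))) {1..<n}))"
    by (subst w_alt) (simp only: linM_fadd linM_smul linM_fsum)
  also have "\<dots> = u n"
    using less.prems Mu \<open>{1..n-1} = {1..<n}\<close> by (simp only: S) (simp add: z_def fadd_def smul_def fun_eq_iff add_divide_distrib)
  finally show ?case .
qed

theorem mainTheorem10:
  shows "(\<exists>\<Phi>. alg_morph_H \<Phi> \<and> (\<forall>n\<ge>1. \<Phi> (u n) = z n)) \<and>
    (\<forall>\<Phi>. alg_morph_H \<Phi> \<and> (\<forall>n\<ge>1. \<Phi> (u n) = z n) \<longrightarrow>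
       bij_betw \<Phi> Hs Hs \<and>
       (\<forall>x\<in>Hs. \<forall>n. homogeneous n x \<longrightarrow> homogeneous n (\<Phi> x)) \<and>
       (\<forall>x\<in>Hs. counit (\<Phi> x) = counit x) \<and>
       (\<forall>x\<in>Hs. \<exists>ps. set ps \<subseteq> Hs \<times> Hs \<and> copFr x = tens_sum ps \<and>
                    cop (\<Phi> x) = tens_sum (map (\<lambda>(a, b). (\<Phi> a, \<Phi> b)) ps)) \<and>
       (\<forall>n\<ge>1. the_inv_into Hs \<Phi> (u n) = w n))"
proof -
  obtain M0 where M0w: "\<forall>F G. M0 F G \<noteq> 0 \<longrightarrow> fw F = fw G" and M0m: "\<forall>F1 F2. M0 (F1 @ F2) = fmul (M0 F1) (M0 F2)"
    and M00: "M0 [] = fone" and M0u: "\<forall>n\<ge>1. linM M0 (u n) = z n" and M0H: "\<forall>x\<in>Hs. linM M0 x \<in> Hs"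
    using morph_exists[of z] homog_z Hs_z by blast
  obtain M1 where M1w: "\<forall>F G. M1 F G \<noteq> 0 \<longrightarrow> fw F = fw G" and M1m: "\<forall>F1 F2. M1 (F1 @ F2) = fmul (M1 F1) (M1 F2)"
    and M10: "M1 [] = fone" and M1u: "\<forall>n\<ge>1. linM M1 (u n) = w n" and M1H: "\<forall>x\<in>Hs. linM M1 x \<in> Hs"
    using morph_exists[of w] w_props by blast
  have g0: "good M0" by (rule good_intro[OF M0w M0m M00])
  have g1: "good M1" by (rule good_intro[OF M1w M1m M10])
  let ?P = "linM M0" and ?Q = "linM M1"
  have amP: "alg_morph_H ?P"
    unfolding alg_morph_H_def
    using M0H by (simp add: linM_fadd linM_smul good_mult[OF g0] good_fone[OF g0])
  have QP: "\<And>x. x \<in> Hs \<Longrightarrow> ?Q (?P x) = x"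
  proof -
    fix x assume "x \<in> Hs"
    then show "?Q (?P x) = x"
    proof (induction rule: Hs.induct)
      case (gen n) then show ?case using M0u Psi_z[OF g1 M1u] by simp
    next
      case one then show ?case by (simp add: good_fone[OF g0] good_fone[OF g1])
    next
      case (add a b) then show ?case by (simp add: linM_fadd)
    next
      case (smul a c) then show ?case by (simp add: linM_smul)
    next
      case (mul a b) then show ?case by (simp add: good_mult[OF g0] good_mult[OF g1])
    qed
  qed
  have PQ: "\<And>x. x \<in> Hs \<Longrightarrow> ?P (?Q x) = x"
  proof -
    fix x assume "x \<in> Hs"
    then show "?P (?Q x) = x"
    proof (induction rule: Hs.induct)
      case (gen n) then show ?case using M1u Phi_w[OF g0 M0u] by simp
    next
      case one then show ?case by (simp add: good_fone[OF g0] good_fone[OF g1])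
    next
      case (add a b) then show ?case by (simp add: linM_fadd)
    next
      case (smul a c) then show ?case by (simp add: linM_smul)
    next
      case (mul a b) then show ?case by (simp add: good_mult[OF g0] good_mult[OF g1])
    qed
  qed
  have eq: "\<And>\<Phi> x. alg_morph_H \<Phi> \<and> (\<forall>n\<ge>1. \<Phi> (u n) = z n) \<Longrightarrow> x \<in> Hs \<Longrightarrow> \<Phi> x = ?P x"
  proof -
    fix \<Phi> x assume A: "alg_morph_H \<Phi> \<and> (\<forall>n\<ge>1. \<Phi> (u n) = z n)" and xH: "x \<in> Hs"
    from xH show "\<Phi> x = ?P x"
    proof (induction rule: Hs.induct)
      case (gen n) then show ?case using A M0u by simp
    next
      case one then show ?case using A by (simp add: alg_morph_H_def good_fone[OF g0])
    next
      case (add a b) then show ?case using A by (simp add: alg_morph_H_def linM_fadd)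
    next
      case (smul a c) then show ?case using A by (simp add: alg_morph_H_def linM_smul)
    next
      case (mul a b) then show ?case using A by (simp add: alg_morph_H_def good_mult[OF g0])
    qed
  qed
  have inj: "\<And>\<Phi>. alg_morph_H \<Phi> \<and> (\<forall>n\<ge>1. \<Phi> (u n) = z n) \<Longrightarrow> inj_on \<Phi> Hs"
  proof (rule inj_onI)
    fix \<Phi> x y assume A: "alg_morph_H \<Phi> \<and> (\<forall>n\<ge>1. \<Phi> (u n) = z n)"
      and xy: "x \<in> Hs" "y \<in> Hs" "\<Phi> x = \<Phi> y"
    then have "?P x = ?P y" using eq[OF A] by simp
    then show "x = y" using QP xy by metis
  qed
  show ?thesis
  proof (intro conjI allI impI)
    show "\<exists>\<Phi>. alg_morph_H \<Phi> \<and> (\<forall>n\<ge>1. \<Phi> (u n) = z n)" using amP M0u by blast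
  next
    fix \<Phi> assume A: "alg_morph_H \<Phi> \<and> (\<forall>n\<ge>1. \<Phi> (u n) = z n)"
    show "bij_betw \<Phi> Hs Hs"
    proof (rule bij_betw_imageI[OF inj[OF A]])
      show "\<Phi> ` Hs = Hs"
      proof
        show "\<Phi> ` Hs \<subseteq> Hs" using A by (auto simp: alg_morph_H_def)
        show "Hs \<subseteq> \<Phi> ` Hs"
        proof
          fix y assume y: "y \<in> Hs"
          have "?Q y \<in> Hs" using M1H y by simp
          moreover have "\<Phi> (?Q y) = y" using eq[OF A \<open>?Q y \<in> Hs\<close>] PQ[OF y] by simp
          ultimately show "y \<in> \<Phi> ` Hs" by (metis image_eqI)
        qed
      qed
    qed
  next
    fix \<Phi> assume A: "alg_morph_H \<Phi> \<and> (\<forall>n\<ge>1. \<Phi> (u n) = z n)"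
    show "\<forall>x\<in>Hs. \<forall>n. homogeneous n x \<longrightarrow> homogeneous n (\<Phi> x)"
      using eq[OF A] linM_homog by simp
  next
    fix \<Phi> assume A: "alg_morph_H \<Phi> \<and> (\<forall>n\<ge>1. \<Phi> (u n) = z n)"
    show "\<forall>x\<in>Hs. counit (\<Phi> x) = counit x"
      using eq[OF A] by (simp add: counit_def linM_counit[where M=M0, OF M00])
  next
    fix \<Phi> assume A: "alg_morph_H \<Phi> \<and> (\<forall>n\<ge>1. \<Phi> (u n) = z n)"
    show "\<forall>x\<in>Hs. \<exists>ps. set ps \<subseteq> Hs \<times> Hs \<and> copFr x = tens_sum ps \<and>
                    cop (\<Phi> x) = tens_sum (map (\<lambda>(a, b). (\<Phi> a, \<Phi> b)) ps)"
    proof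
      fix x assume x: "x \<in> Hs"
      obtain ps where ps: "set ps \<subseteq> Hs \<times> Hs" "copFr x = tens_sum ps"
          "cop (?P x) = tens_sum (map (\<lambda>(a, b). (?P a, ?P b)) ps)"
        using cop_all[OF g0 M0u M0H x] by blast
      have "map (\<lambda>(a, b). (\<Phi> a, \<Phi> b)) ps = map (\<lambda>(a, b). (?P a, ?P b)) ps"
        using ps(1) eq[OF A] by (auto intro!: map_cong)
      then show "\<exists>ps. set ps \<subseteq> Hs \<times> Hs \<and> copFr x = tens_sum ps \<and>
                    cop (\<Phi> x) = tens_sum (map (\<lambda>(a, b). (\<Phi> a, \<Phi> b)) ps)"
        using ps eq[OF A x] by metis
    qed
  next
    fix \<Phi> and n :: nat assume A: "alg_morph_H \<Phi> \<and> (\<forall>n\<ge>1. \<Phi> (u n) = z n)" and n: "1 \<le> n"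
    have wH: "w n \<in> Hs" using w_props by simp
    have "\<Phi> (w n) = u n" using eq[OF A wH] Phi_w[OF g0 M0u n] by simp
    then show "the_inv_into Hs \<Phi> (u n) = w n" using the_inv_into_f_eq[OF inj[OF A] _ wH] by simp
  qed
qed


end
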